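(* Let $g:\mathbb N\to\mathbb C$ and suppose there exist $n_0\in\mathbb N$, $c_1,c_2\in(0,\infty)$ and $d_1,d_2\in(0,1/2)$ such that $c_1n^{-d_1}\le\prod_{k=0}^n|g(k)|\le c_2n^{d_2}$ for all $n>n_0$ (and $g(k)\neq0$ for all $k$). Then $\frac12(L_g+L_{\bar g^{-1}})$ is a time operator of $N$.
   Context: $\ell^2=\ell^2(\mathbb N)$, $\mathbb N=\{0,1,\dots\}$, basis $(\xi_n)$; $N\xi_n=n\xi_n$; $L$ left shift, $L^*$ right shift. For $h:\mathbb N\to\mathbb C\setminus\{0\}$, $h_N$ is multiplication $\xi_n\mapsto h(n)\xi_n$. For a linear operator $A$, $\mathrm D(\log A)=\{f\in\bigcap_{k\ge0}\mathrm D(A^k):\lim_K\sum_{k=1}^K\frac1k(\mathbf1-A)^kf\text{ exists}\}$, $\log Af=-\sum_{k\ge1}\frac1k(\mathbf1-A)^kf$. For such $h$, $L_h=i\{\log(\mathbf1-h_NL)-\log(\mathbf1-L^*h_N^{-1})\}$ on the intersection of the domains; $\bar g^{-1}$ denotes the function $n\mapsto 1/\overline{g(n)}$, so $L_{\bar g^{-1}}=i\{\log(\mathbf1-\bar g_N^{-1}L)-\log(\mathbf1-L^*\bar g_N)\}$. A time operator of a self-adjoint $H$ is a symmetric (densely defined) operator $T$ with $[H,T]=-i\mathbf1$ on some nonzero subspace of $\mathrm D(HT)\cap\mathrm D(TH)$. *)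

theory Defs
  imports Complex_Main
begin

type_synonym seq = "nat \<Rightarrow> complex"

definition l2 :: "seq set" where
  "l2 = {f. summable (\<lambda>n. (cmod (f n))^2)}"

definition l2norm :: "seq \<Rightarrow> real" where
  "l2norm f = sqrt (\<Sum>n. (cmod (f n))^2)"

definition l2inner :: "seq \<Rightarrow> seq \<Rightarrow> complex" where
  "l2inner f g = (\<Sum>n. cnj (f n) * g n)"

definition l2_lim :: "(nat \<Rightarrow> seq) \<Rightarrow> seq \<Rightarrow> bool" where
  "l2_lim S x \<longleftrightarrow> x \<in> l2 \<and> (\<lambda>K. l2norm (\<lambda>n. S K n - x n)) \<longlonglongrightarrow> 0"

text \<open>An operator is a pair (domain, action); the action is only meaningful on the domain.\<close>
type_synonym op = "seq set \<times> (seq \<Rightarrow> seq)"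

definition dom :: "op \<Rightarrow> seq set" where "dom A = fst A"
definition app :: "op \<Rightarrow> seq \<Rightarrow> seq" where "app A = snd A"

definition op_id :: op where "op_id = (l2, \<lambda>f. f)"

definition op_comp :: "op \<Rightarrow> op \<Rightarrow> op" where
  "op_comp A B = ({f \<in> dom B. app B f \<in> dom A}, \<lambda>f. app A (app B f))"

definition op_add :: "op \<Rightarrow> op \<Rightarrow> op" where
  "op_add A B = (dom A \<inter> dom B, \<lambda>f n. app A f n + app B f n)"

definition op_diff :: "op \<Rightarrow> op \<Rightarrow> op" where
  "op_diff A B = (dom A \<inter> dom B, \<lambda>f n. app A f n - app B f n)"

definition op_scale :: "complex \<Rightarrow> op \<Rightarrow> op" where
  "op_scale c A = (dom A, \<lambda>f n. c * app A f n)"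

primrec op_pow :: "op \<Rightarrow> nat \<Rightarrow> op" where
  "op_pow A 0 = op_id"
| "op_pow A (Suc k) = op_comp A (op_pow A k)"

definition mult_op :: "(nat \<Rightarrow> complex) \<Rightarrow> op" where
  "mult_op h = ({f \<in> l2. (\<lambda>n. h n * f n) \<in> l2}, \<lambda>f n. h n * f n)"

definition num_op :: op where "num_op = mult_op (\<lambda>n. of_nat n)"

text \<open>Left shift L xi_n = xi_(n-1), L xi_0 = 0, i.e. (L f)(n) = f(n+1).\<close>
definition lshift :: op where "lshift = (l2, \<lambda>f n. f (Suc n))"

text \<open>Right shift L* xi_n = xi_(n+1), i.e. (L* f)(n) = f(n-1), (L* f)(0) = 0.\<close>
definition rshift :: op where "rshift = (l2, \<lambda>f n. if n = 0 then 0 else f (n - 1))"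

definition log_partial :: "op \<Rightarrow> seq \<Rightarrow> nat \<Rightarrow> seq" where
  "log_partial A f K = (\<lambda>n. \<Sum>k=1..K. (1 / of_nat k) * app (op_pow (op_diff op_id A) k) f n)"

definition log_dom :: "op \<Rightarrow> seq set" where
  "log_dom A = {f. (\<forall>k. f \<in> dom (op_pow A k)) \<and> (\<exists>x. l2_lim (log_partial A f) x)}"

definition op_log :: "op \<Rightarrow> op" where
  "op_log A = (log_dom A, \<lambda>f n. - (THE x. l2_lim (log_partial A f) x) n)"

definition L_op :: "(nat \<Rightarrow> complex) \<Rightarrow> op" where
  "L_op h = op_scale \<i>
     (op_diff (op_log (op_diff op_id (op_comp (mult_op h) lshift)))
              (op_log (op_diff op_id (op_comp rshift (mult_op (\<lambda>n. 1 / h n))))))"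

definition symmetric_op :: "op \<Rightarrow> bool" where
  "symmetric_op T \<longleftrightarrow> dom T \<subseteq> l2 \<and> (\<forall>f\<in>dom T. app T f \<in> l2) \<and>
     (\<forall>f\<in>dom T. \<forall>g\<in>dom T. l2inner (app T f) g = l2inner f (app T g))"

definition densely_defined :: "op \<Rightarrow> bool" where
  "densely_defined T \<longleftrightarrow> (\<forall>f\<in>l2. \<forall>e>0. \<exists>g\<in>dom T. l2norm (\<lambda>n. f n - g n) < e)"

definition linear_subspace :: "seq set \<Rightarrow> bool" where
  "linear_subspace V \<longleftrightarrow> (\<lambda>n. 0) \<in> V \<and> (\<forall>f\<in>V. \<forall>g\<in>V. (\<lambda>n. f n + g n) \<in> V) \<and>
     (\<forall>c. \<forall>f\<in>V. (\<lambda>n. c * f n) \<in> V)"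

definition time_operator :: "op \<Rightarrow> op \<Rightarrow> bool" where
  "time_operator T H \<longleftrightarrow> symmetric_op T \<and> densely_defined T \<and>
     (\<exists>V. linear_subspace V \<and> V \<noteq> {\<lambda>n. 0} \<and>
          V \<subseteq> dom (op_comp H T) \<inter> dom (op_comp T H) \<and>
          (\<forall>f\<in>V. \<forall>n. app (op_comp H T) f n - app (op_comp T H) f n = - \<i> * f n))"

end

theory Submission
  imports Defs "HOL-Analysis.Analysis"
begin


definition fin :: "seq \<Rightarrow> bool" where "fin f \<longleftrightarrow> (\<exists>M. \<forall>m\<ge>M. f m = 0)"

lemma l2_iff: "f \<in> l2 \<longleftrightarrow> summable (\<lambda>n. (cmod (f n))^2)" by (simp add: l2_def)

lemma fin_l2: assumes "fin f" shows "f \<in> l2"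
proof -
  obtain M where M: "\<forall>m\<ge>M. f m = 0" using assms fin_def by auto
  have "summable (\<lambda>n. (cmod (f n))^2)"
    by (rule summable_finite[of "{..<M}"]) (use M in auto)
  thus ?thesis by (simp add: l2_def)
qed

lemma l2_add: assumes "f \<in> l2" "g \<in> l2" shows "(\<lambda>n. f n + g n) \<in> l2"
proof -
  have b: "norm ((cmod (f n + g n))^2) \<le> 2 * (cmod (f n))^2 + 2 * (cmod (g n))^2" for n
  proof -
    have "cmod (f n + g n) \<le> cmod (f n) + cmod (g n)" by (rule norm_triangle_ineq)
    hence "(cmod (f n + g n))^2 \<le> (cmod (f n) + cmod (g n))^2"
      by (rule power_mono) simp
    also have "\<dots> \<le> 2 * (cmod (f n))^2 + 2 * (cmod (g n))^2"
      using sum_squares_bound[of "cmod (f n)" "cmod (g n)"] by (simp add: power2_sum)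
    finally show ?thesis by simp
  qed
  have s: "summable (\<lambda>n. 2 * (cmod (f n))^2 + 2 * (cmod (g n))^2)"
    using assms by (intro summable_add summable_mult) (auto simp: l2_def)
  have "summable (\<lambda>n. (cmod (f n + g n))^2)"
    by (rule summable_comparison_test[OF _ s]) (use b in blast)
  thus ?thesis unfolding l2_def by simp
qed

lemma l2_scale: assumes "f \<in> l2" shows "(\<lambda>n. c * f n) \<in> l2"
proof -
  have "summable (\<lambda>n. (cmod c)^2 * (cmod (f n))^2)" using assms by (intro summable_mult) (auto simp: l2_def)
  thus ?thesis by (simp add: l2_def norm_mult power_mult_distrib)
qed

lemma l2_neg: assumes "f \<in> l2" shows "(\<lambda>n. - f n) \<in> l2"
  using l2_scale[OF assms, of "-1"] by simp

lemma l2_diff: assumes "f \<in> l2" "g \<in> l2" shows "(\<lambda>n. f n - g n) \<in> l2"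
  using l2_add[OF assms(1) l2_neg[OF assms(2)]] by simp

lemma l2_zero: "(\<lambda>n. 0) \<in> l2" by (simp add: l2_def)

lemma l2_cong: "f \<in> l2 \<Longrightarrow> (\<And>n. f n = g n) \<Longrightarrow> g \<in> l2"
  proof -
    assume "f \<in> l2" "\<And>n. f n = g n"
    hence "f = g" by auto
    thus ?thesis using \<open>f \<in> l2\<close> by simp
  qed

lemma l2_eventually: assumes "\<forall>\<^sub>F n in sequentially. cmod (g n) \<le> b n" "summable (\<lambda>n. (b n)^2)"
  shows "g \<in> l2"
proof -
  have "\<forall>\<^sub>F n in sequentially. norm ((cmod (g n))^2) \<le> (b n)^2"
    using assms(1)
  proof eventually_elim
    case (elim n)
    hence "(cmod (g n))^2 \<le> (b n)^2" by (intro power_mono) simp_all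
    thus ?case by simp
  qed
  hence "summable (\<lambda>n. (cmod (g n))^2)" using assms(2) by (rule summable_comparison_test_ev)
  thus ?thesis unfolding l2_def by simp
qed

lemma l2_prod_summable: assumes "f \<in> l2" "g \<in> l2"
  shows "summable (\<lambda>n. cmod (cnj (f n) * g n))"
proof -
  have b: "norm (cmod (cnj (f n) * g n)) \<le> (cmod (f n))^2 + (cmod (g n))^2" for n
  proof -
    have h1: "0 \<le> cmod (f n) * cmod (g n)" by simp
    have h2: "2 * cmod (f n) * cmod (g n) \<le> (cmod (f n))^2 + (cmod (g n))^2"
      using sum_squares_bound[of "cmod (f n)" "cmod (g n)"] by simp
    have e: "norm (cmod (cnj (f n) * g n)) = cmod (f n) * cmod (g n)" by (simp add: norm_mult)
    show ?thesis unfolding e using h1 h2 by linarith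
  qed
  have s: "summable (\<lambda>n. (cmod (f n))^2 + (cmod (g n))^2)"
    using assms by (intro summable_add) (auto simp: l2_def)
  show ?thesis
    by (rule summable_comparison_test[OF _ s]) (use b in blast)
qed

lemma l2_prod_summable': assumes "f \<in> l2" "g \<in> l2"
  shows "summable (\<lambda>n. cnj (f n) * g n)"
  by (rule summable_norm_cancel) (simp add: l2_prod_summable[OF assms])


definition Cop :: "(nat \<Rightarrow> complex) \<Rightarrow> seq \<Rightarrow> seq" where
  "Cop h f = (\<lambda>n. h n * f (Suc n))"
definition Bop :: "(nat \<Rightarrow> complex) \<Rightarrow> seq \<Rightarrow> seq" where
  "Bop w f = (\<lambda>n. if n = 0 then 0 else w (n - 1) * f (n - 1))"

definition X1 :: "(nat \<Rightarrow> complex) \<Rightarrow> op" where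
  "X1 h = op_diff op_id (op_comp (mult_op h) lshift)"
definition X2 :: "(nat \<Rightarrow> complex) \<Rightarrow> op" where
  "X2 h = op_diff op_id (op_comp rshift (mult_op (\<lambda>n. 1 / h n)))"

lemma L_op_X: "L_op h = op_scale \<i> (op_diff (op_log (X1 h)) (op_log (X2 h)))"
  by (simp add: L_op_def X1_def X2_def)

lemma app_X1_C: "app (op_diff op_id (X1 h)) f = Cop h f"
  by (simp add: X1_def op_diff_def app_def op_id_def op_comp_def mult_op_def lshift_def Cop_def)

lemma app_X2_C: "app (op_diff op_id (X2 h)) f = Bop (\<lambda>n. 1 / h n) f"
  by (auto simp: X2_def op_diff_def app_def op_id_def op_comp_def mult_op_def rshift_def Bop_def)

lemma app_X1: "app (X1 h) f = (\<lambda>n. f n - Cop h f n)"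
  by (simp add: X1_def op_diff_def app_def op_id_def op_comp_def mult_op_def lshift_def Cop_def)

lemma app_X2: "app (X2 h) f = (\<lambda>n. f n - Bop (\<lambda>n. 1 / h n) f n)"
  by (auto simp: X2_def op_diff_def app_def op_id_def op_comp_def mult_op_def rshift_def Bop_def)

lemma dom_X1: "dom (X1 h) = {f \<in> l2. (\<lambda>n. f (Suc n)) \<in> l2 \<and> Cop h f \<in> l2}"
  by (auto simp: X1_def op_diff_def dom_def app_def op_id_def op_comp_def mult_op_def lshift_def Cop_def)

lemma dom_X2: "dom (X2 h) = {f \<in> l2. Bop (\<lambda>n. 1 / h n) f \<in> l2}"
proof -
  have "Bop (\<lambda>n. 1 / h n) f \<in> l2 \<longleftrightarrow> (\<lambda>n. 1 / h n * f n) \<in> l2" for f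
  proof
    assume a: "Bop (\<lambda>n. 1 / h n) f \<in> l2"
    have "summable (\<lambda>n. (cmod (Bop (\<lambda>n. 1 / h n) f (Suc n)))^2)"
      using a unfolding l2_def summable_Suc_iff[of "\<lambda>n. (cmod (Bop (\<lambda>n. 1 / h n) f n))^2"] by simp
    hence "(\<lambda>n. Bop (\<lambda>n. 1 / h n) f (Suc n)) \<in> l2" by (simp add: l2_def)
    thus "(\<lambda>n. 1 / h n * f n) \<in> l2" by (simp add: Bop_def)
  next
    assume a: "(\<lambda>n. 1 / h n * f n) \<in> l2"
    have "summable (\<lambda>n. (cmod (Bop (\<lambda>n. 1 / h n) f (Suc n)))^2)"
      using a unfolding l2_def by (simp add: Bop_def)
    thus "Bop (\<lambda>n. 1 / h n) f \<in> l2"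
      unfolding l2_def summable_Suc_iff[of "\<lambda>n. (cmod (Bop (\<lambda>n. 1 / h n) f n))^2"] by simp
  qed
  thus ?thesis
    by (auto simp: X2_def op_diff_def dom_def app_def op_id_def op_comp_def mult_op_def rshift_def)
qed

lemma app_pow: "app (op_pow A k) f = (app A ^^ k) f"
  by (induction k arbitrary: f) (auto simp: op_id_def app_def op_comp_def)

lemma dom_pow0: "dom (op_pow A 0) = l2" by (simp add: op_id_def dom_def)
lemma dom_powS: "dom (op_pow A (Suc k)) = {f \<in> dom (op_pow A k). (app A ^^ k) f \<in> dom A}"
  unfolding op_pow.simps op_comp_def dom_def by (simp add: app_pow)

lemma Cop_pow: "(Cop h ^^ k) f n = (\<Prod>j\<in>{n..<n+k}. h j) * f (n + k)"
proof (induction k arbitrary: f)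
  case 0 then show ?case by simp
next
  case (Suc k)
  have "(Cop h ^^ Suc k) f n = (Cop h ^^ k) (Cop h f) n" by (simp add: funpow_Suc_right del: funpow.simps)
  also have "\<dots> = (\<Prod>j\<in>{n..<n+k}. h j) * (h (n+k) * f (Suc (n + k)))"
    by (simp add: Suc Cop_def)
  also have "\<dots> = (\<Prod>j\<in>{n..<n+Suc k}. h j) * f (n + Suc k)"
    by (simp add: prod.atLeastLessThan_Suc mult.assoc)
  finally show ?case .
qed

lemma Bop_pow: "(Bop w ^^ k) f n = (if k \<le> n then (\<Prod>j\<in>{n-k..<n}. w j) * f (n - k) else 0)"
proof (induction k arbitrary: f n)
  case 0 then show ?case by simp
next
  case (Suc k)
  have "(Bop w ^^ Suc k) f n = Bop w ((Bop w ^^ k) f) n" by simp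
  also have "\<dots> = (if Suc k \<le> n then (\<Prod>j\<in>{n-Suc k..<n}. w j) * f (n - Suc k) else 0)"
  proof (cases "Suc k \<le> n")
    case True
    define m where "m = n - Suc k"
    have m: "n = Suc (m + k)" using True unfolding m_def by simp
    have p: "(\<Prod>j\<in>{m..<Suc (m+k)}. w j) = w (m+k) * (\<Prod>j\<in>{m..<m+k}. w j)"
      by (simp add: prod.atLeastLessThan_Suc)
    have "Bop w ((Bop w ^^ k) f) n = w (m+k) * ((Bop w ^^ k) f (m+k))"
      by (simp add: Bop_def m)
    also have "(Bop w ^^ k) f (m+k) = (\<Prod>j\<in>{m..<m+k}. w j) * f m"
      by (simp add: Suc.IH)
    finally have "Bop w ((Bop w ^^ k) f) n = (\<Prod>j\<in>{m..<Suc (m+k)}. w j) * f m"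
      unfolding p by (simp only: mult.assoc)
    thus ?thesis using True m by simp
  next
    case False
    hence "\<not> k \<le> n - 1 \<or> n = 0" by arith
    thus ?thesis using False by (auto simp add: Bop_def Suc.IH)
  qed
  finally show ?case .
qed


lemma fin_Cop: "fin f \<Longrightarrow> fin (Cop h f)"
proof -
  assume "fin f" then obtain M where M: "\<forall>m\<ge>M. f m = 0" by (auto simp: fin_def)
  have "\<forall>m\<ge>M. Cop h f m = 0" using M by (auto simp: Cop_def)
  thus ?thesis by (auto simp: fin_def)
qed
lemma fin_Cop_pow: "fin f \<Longrightarrow> fin ((Cop h ^^ k) f)"
  by (induction k) (auto simp: fin_Cop)
lemma fin_Bop: "fin f \<Longrightarrow> fin (Bop w f)"
proof -
  assume "fin f" then obtain M where M: "\<forall>m\<ge>M. f m = 0" by (auto simp: fin_def)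
  have "\<forall>m\<ge>Suc M. Bop w f m = 0" using M by (auto simp: Bop_def)
  thus ?thesis by (auto simp: fin_def)
qed
lemma fin_Bop_pow: "fin f \<Longrightarrow> fin ((Bop h ^^ k) f)"
  by (induction k) (auto simp: fin_Bop)
lemma fin_diff: "fin f \<Longrightarrow> fin g \<Longrightarrow> fin (\<lambda>n. f n - g n)"
proof -
  assume "fin f" "fin g"
  then obtain M1 M2 where "\<forall>m\<ge>M1. f m = 0" "\<forall>m\<ge>M2. g m = 0" by (auto simp: fin_def)
  hence "\<forall>m\<ge>max M1 M2. f m - g m = 0" by auto
  thus ?thesis unfolding fin_def by (rule exI[of _ "max M1 M2"])
qed
lemma fin_add: "fin f \<Longrightarrow> fin g \<Longrightarrow> fin (\<lambda>n. f n + g n)"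
proof -
  assume "fin f" "fin g"
  then obtain M1 M2 where "\<forall>m\<ge>M1. f m = 0" "\<forall>m\<ge>M2. g m = 0" by (auto simp: fin_def)
  hence "\<forall>m\<ge>max M1 M2. f m + g m = 0" by auto
  thus ?thesis unfolding fin_def by (rule exI[of _ "max M1 M2"])
qed
lemma fin_scale: "fin f \<Longrightarrow> fin (\<lambda>n. c n * f n)"
  unfolding fin_def by auto
lemma fin_shift: "fin f \<Longrightarrow> fin (\<lambda>n. f (Suc n))"
proof -
  assume "fin f" then obtain M where M: "\<forall>m\<ge>M. f m = 0" by (auto simp: fin_def)
  have "\<forall>m\<ge>M. f (Suc m) = 0" using M by auto
  thus ?thesis by (auto simp: fin_def)
qed
lemma fin_sum: "(\<And>k. k \<in> A \<Longrightarrow> fin (F k)) \<Longrightarrow> fin (\<lambda>n. \<Sum>k\<in>A. F k n)"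
proof (induction A rule: infinite_finite_induct)
  case (infinite A) then show ?case by (simp add: fin_def)
next
  case empty then show ?case by (simp add: fin_def)
next
  case (insert x F) then show ?case by (simp add: fin_add)
qed
lemma fin_zero: "fin (\<lambda>n. 0)" by (simp add: fin_def)

lemma fin_X1: "fin f \<Longrightarrow> f \<in> dom (X1 h) \<and> fin (app (X1 h) f)"
  by (simp add: dom_X1 app_X1 fin_l2 fin_shift fin_Cop fin_diff)
lemma fin_X2: "fin f \<Longrightarrow> f \<in> dom (X2 h) \<and> fin (app (X2 h) f)"
  by (simp add: dom_X2 app_X2 fin_l2 fin_Bop fin_diff)

lemma fin_pow_iter: assumes "\<And>f. fin f \<Longrightarrow> f \<in> dom A \<and> fin (app A f)" "fin f"
  shows "fin ((app A ^^ k) f)"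
  using assms(2) by (induction k) (auto dest: assms(1))

lemma fin_pow_dom: assumes "\<And>f. fin f \<Longrightarrow> f \<in> dom A \<and> fin (app A f)" "fin f"
  shows "f \<in> dom (op_pow A k)"
proof (induction k)
  case 0 then show ?case using assms(2) by (simp add: op_id_def dom_def fin_l2)
next
  case (Suc k) then show ?case
    using assms(1)[OF fin_pow_iter[OF assms, of k]] by (simp only: dom_powS) simp
qed

lemma log_partial_X1: "log_partial (X1 h) f K = (\<lambda>n. \<Sum>k=1..K. 1 / of_nat k * (Cop h ^^ k) f n)"
proof -
  have "app (op_diff op_id (X1 h)) = Cop h" using app_X1_C by auto
  thus ?thesis by (simp add: log_partial_def app_pow)
qed

lemma log_partial_X2: "log_partial (X2 h) f K = (\<lambda>n. \<Sum>k=1..K. 1 / of_nat k * (Bop (\<lambda>n. 1 / h n) ^^ k) f n)"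
proof -
  have "app (op_diff op_id (X2 h)) = Bop (\<lambda>n. 1 / h n)" using app_X2_C by auto
  thus ?thesis by (simp add: log_partial_def app_pow)
qed

lemma l2norm_zero: "l2norm (\<lambda>n. 0) = 0" by (simp add: l2norm_def)

lemma coord_le_l2norm: assumes "y \<in> l2" shows "cmod (y n) \<le> l2norm y"
proof -
  have s: "summable (\<lambda>n. (cmod (y n))^2)" using assms by (simp add: l2_def)
  have "(\<Sum>i\<in>{n}. (cmod (y i))^2) \<le> (\<Sum>i. (cmod (y i))^2)"
    by (rule sum_le_suminf[OF s]) auto
  hence "(cmod (y n))^2 \<le> (\<Sum>i. (cmod (y i))^2)" by simp
  hence "sqrt ((cmod (y n))^2) \<le> l2norm y" unfolding l2norm_def by (rule real_sqrt_le_mono)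
  thus ?thesis by simp
qed

lemma l2_lim_pointwise: assumes "\<And>K. S K \<in> l2" "l2_lim S x"
  shows "(\<lambda>K. S K n) \<longlonglongrightarrow> x n"
proof -
  have x: "x \<in> l2" and t: "(\<lambda>K. l2norm (\<lambda>n. S K n - x n)) \<longlonglongrightarrow> 0" using assms(2) by (auto simp: l2_lim_def)
  have b: "norm (S K n - x n) \<le> l2norm (\<lambda>n. S K n - x n)" for K
    using coord_le_l2norm[OF l2_diff[OF assms(1) x]] by simp
  have "(\<lambda>K. S K n - x n) \<longlonglongrightarrow> 0"
    by (rule tendsto_norm_zero_cancel, rule tendsto_sandwich[of "\<lambda>_. 0" _ _ "\<lambda>K. l2norm (\<lambda>n. S K n - x n)"])
       (use b t in auto)
  thus ?thesis by (simp add: LIM_zero_cancel)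
qed

lemma l2_lim_unique: assumes "\<And>K. S K \<in> l2" "l2_lim S x" "l2_lim S y" shows "x = y"
proof
  fix n show "x n = y n"
    using l2_lim_pointwise[OF assms(1,2)] l2_lim_pointwise[OF assms(1,3)] LIMSEQ_unique by blast
qed

lemma l2_lim_the: assumes "\<And>K. S K \<in> l2" "l2_lim S x" shows "(THE x. l2_lim S x) = x"
  by (rule the_equality[where P="\<lambda>x. l2_lim S x", OF assms(2)]) (rule l2_lim_unique[OF assms(1)], assumption, rule assms(2))

lemma l2_lim_ev_const: assumes "\<And>K. K \<ge> M \<Longrightarrow> S K = S M" "fin (S M)" shows "l2_lim S (S M)"
proof -
  have "\<forall>\<^sub>F K in sequentially. l2norm (\<lambda>n. S K n - S M n) = 0"
  proof (rule eventually_mono[OF eventually_ge_at_top[of M]])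
    fix K assume "M \<le> K"
    hence "S K = S M" by (rule assms(1))
    thus "l2norm (\<lambda>n. S K n - S M n) = 0" by (simp add: l2norm_zero)
  qed
  hence "(\<lambda>K. l2norm (\<lambda>n. S K n - S M n)) \<longlonglongrightarrow> 0" by (rule tendsto_eventually)
  thus ?thesis using fin_l2[OF assms(2)] by (simp add: l2_lim_def)
qed

lemma X1_lim_fin: assumes M: "\<forall>m\<ge>M. f m = 0"
  shows "l2_lim (log_partial (X1 h) f) (\<lambda>n. \<Sum>k=1..M. 1 / of_nat k * (Cop h ^^ k) f n)"
proof -
  have z: "(Cop h ^^ k) f n = 0" if "k \<ge> M" for k n using that M by (simp add: Cop_pow)
  have e: "log_partial (X1 h) f K = log_partial (X1 h) f M" if "K \<ge> M" for K
  proof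
    fix n
    have "(\<Sum>k=1..K. 1 / of_nat k * (Cop h ^^ k) f n) = (\<Sum>k=1..M. 1 / of_nat k * (Cop h ^^ k) f n)"
      by (rule sum.mono_neutral_right) (use that z in auto)
    thus "log_partial (X1 h) f K n = log_partial (X1 h) f M n" by (simp add: log_partial_X1)
  qed
  have f: "fin f" using M by (auto simp: fin_def)
  have "fin (log_partial (X1 h) f M)" unfolding log_partial_X1
    by (intro fin_sum fin_scale[where c="\<lambda>_. _"] fin_Cop_pow f)
  from l2_lim_ev_const[where S="log_partial (X1 h) f", OF e this] show ?thesis by (simp add: log_partial_X1)
qed


lemma tail_tendsto: assumes "summable (f :: nat \<Rightarrow> real)"
  shows "(\<lambda>K. \<Sum>n. f (n + K)) \<longlonglongrightarrow> 0"
proof -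
  have "(\<lambda>K. (\<Sum>n. f n) - (\<Sum>i<K. f i)) \<longlonglongrightarrow> (\<Sum>n. f n) - (\<Sum>n. f n)"
    by (intro tendsto_diff tendsto_const summable_LIMSEQ assms)
  thus ?thesis by (simp add: suminf_minus_initial_segment[OF assms])
qed

lemma powr_sq: "((x::real) powr a)^2 = x powr (2 * a)"
proof -
  have "x powr (2 * a) = x powr (a + a)" by (rule arg_cong[where f="\<lambda>t. x powr t"]) simp
  also have "\<dots> = x powr a * x powr a" by (rule powr_add)
  finally show ?thesis by (simp add: power2_eq_square)
qed

lemma Bsum_bound:
  fixes w f :: "nat \<Rightarrow> complex" and F d :: real
  assumes M: "\<forall>m\<ge>M. f m = 0" and F0: "F \<ge> 0"
    and bnd: "\<forall>n\<ge>N1. \<forall>m<M. cmod (\<Prod>j\<in>{m..<n}. w j) * cmod (f m) \<le> F * real n powr d"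
    and n: "n \<ge> max N1 (max (2*M) 1)"
  shows "(\<Sum>k\<in>{1..n}. cmod (1 / of_nat k * (Bop w ^^ k) f n)) \<le> 2 * real M * F * real n powr (d - 1)"
proof -
  define \<phi> where "\<phi> k = cmod (1 / of_nat k * (Bop w ^^ k) f n)" for k
  define \<psi> where "\<psi> m = \<phi> (n - m)" for m
  have "(\<Sum>k\<in>{1..n}. \<phi> k) = (\<Sum>i<n. \<phi> (Suc i))" by (simp add: sum.atLeast1_atMost_eq)
  also have "\<dots> = (\<Sum>i<n. \<psi> (n - Suc i))"
    by (rule sum.cong) (auto simp: \<psi>_def Suc_diff_Suc)
  also have "\<dots> = (\<Sum>m<n. \<psi> m)" by (rule sum.nat_diff_reindex)
  also have "\<dots> = (\<Sum>m<M. \<psi> m)"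
  proof (rule sum.mono_neutral_right)
    show "{..<M} \<subseteq> {..<n}" using n by auto
    show "\<forall>i\<in>{..<n} - {..<M}. \<psi> i = 0"
      using M by (auto simp: \<psi>_def \<phi>_def Bop_pow)
  qed simp
  also have "\<dots> \<le> (\<Sum>m<M. 2 / real n * (F * real n powr d))"
  proof (rule sum_mono)
    fix m assume m: "m \<in> {..<M}"
    have nm: "m < n" using m n by auto
    have "\<psi> m = cmod (1 / of_nat (n - m)) * (cmod (\<Prod>j\<in>{m..<n}. w j) * cmod (f m))"
      using nm by (simp add: \<psi>_def \<phi>_def Bop_pow norm_mult norm_divide)
    also have "\<dots> \<le> 2 / real n * (F * real n powr d)"
    proof (rule mult_mono)
      have "real n \<le> 2 * real (n - m)" using m n by auto
      moreover have "real (n - m) > 0" using nm by simp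
      moreover have "cmod (1 / (of_nat (n - m) :: complex)) = 1 / real (n - m)"
        by (simp only: norm_divide norm_one norm_of_nat)
      moreover have "1 / real (n - m) \<le> 2 / real n"
        using calculation(1,2) by (simp add: divide_simps del: of_nat_diff)
      ultimately show "cmod (1 / of_nat (n - m)) \<le> 2 / real n" by simp
      show "cmod (\<Prod>j\<in>{m..<n}. w j) * cmod (f m) \<le> F * real n powr d"
        using bnd m n by auto
    qed (simp_all add: F0)
    finally show "\<psi> m \<le> 2 / real n * (F * real n powr d)" .
  qed
  also have "\<dots> = 2 * real M * F * real n powr (d - 1)"
    using n by (simp add: powr_diff field_simps)
  finally show ?thesis by (simp add: \<phi>_def)
qed

lemma Blim:
  fixes w f :: "nat \<Rightarrow> complex" and F d :: real
  assumes M: "\<forall>m\<ge>M. f m = 0" and F0: "F \<ge> 0" and d: "d < 1/2"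
    and bnd: "\<forall>n\<ge>N1. \<forall>m<M. cmod (\<Prod>j\<in>{m..<n}. w j) * cmod (f m) \<le> F * real n powr d"
  shows "l2_lim (\<lambda>K n. \<Sum>k=1..K. 1 / of_nat k * (Bop w ^^ k) f n)
                (\<lambda>n. \<Sum>k=1..n. 1 / of_nat k * (Bop w ^^ k) f n)"
proof -
  define N2 where "N2 = max N1 (max (2*M) 1)"
  define c where "c = 2 * real M * F"
  define b where "b n = c * real n powr (d - 1)" for n
  define t where "t k n = 1 / of_nat k * (Bop w ^^ k) f n" for k n
  define x where "x n = (\<Sum>k=1..n. t k n)" for n
  define S where "S K n = (\<Sum>k=1..K. t k n)" for K n
  have zero: "t k n = 0" if "n < k" for k n using that by (simp add: t_def Bop_pow)
  have B: "(\<Sum>k\<in>{1..n}. cmod (t k n)) \<le> b n" if "n \<ge> N2" for n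
    using Bsum_bound[OF M F0 bnd, of n] that by (simp add: N2_def b_def c_def t_def)
  have sb: "summable (\<lambda>n. (b n)^2)"
  proof -
    have "summable (\<lambda>n. real n powr (2 * (d - 1)))" using d by (subst summable_real_powr_iff) simp
    hence "summable (\<lambda>n. c^2 * real n powr (2 * (d - 1)))" by (rule summable_mult)
    thus ?thesis by (simp add: b_def power_mult_distrib powr_sq)
  qed
  have xb: "cmod (x n) \<le> b n" if "n \<ge> N2" for n
    unfolding x_def by (rule order_trans[OF norm_sum B[OF that]])
  have xl2: "x \<in> l2"
    by (rule l2_eventually[OF _ sb]) (rule eventually_mono[OF eventually_ge_at_top[of N2]], rule xb)
  have db: "cmod (S K n - x n) \<le> (if K < n then b n else 0)" if K: "K \<ge> N2" for K n
  proof (cases "K < n")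
    case False
    have "S K n = x n" unfolding S_def x_def
      by (rule sum.mono_neutral_right) (use False zero in auto)
    thus ?thesis using False by simp
  next
    case True
    have u: "{1..n} = {1..K} \<union> {Suc K..n}" using True by auto
    have "x n = S K n + (\<Sum>k\<in>{Suc K..n}. t k n)"
      unfolding x_def S_def u by (rule sum.union_disjoint) auto
    hence "cmod (S K n - x n) = cmod (\<Sum>k\<in>{Suc K..n}. t k n)" by (simp add: norm_minus_commute)
    also have "\<dots> \<le> (\<Sum>k\<in>{Suc K..n}. cmod (t k n))" by (rule norm_sum)
    also have "\<dots> \<le> (\<Sum>k\<in>{1..n}. cmod (t k n))" by (rule sum_mono2) auto
    also have "\<dots> \<le> b n" using B True K by simp
    finally show ?thesis using True by simp
  qed
  define g where "g K n = (if K < n then (b n)^2 else 0)" for K n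
  have sg: "summable (g K)" for K
    by (rule summable_comparison_test[OF _ sb]) (simp add: g_def)
  have gt: "suminf (g K) = (\<Sum>i. (b (i + Suc K))^2)" for K
    using suminf_split_initial_segment[OF sg[of K], of "Suc K"] by (simp add: g_def)
  have tl: "(\<lambda>K. sqrt (suminf (g K))) \<longlonglongrightarrow> 0"
  proof -
    have "(\<lambda>K. \<Sum>i. (b (i + Suc K))^2) \<longlonglongrightarrow> 0"
      using LIMSEQ_Suc[OF tail_tendsto[OF sb]] by simp
    hence "(\<lambda>K. suminf (g K)) \<longlonglongrightarrow> 0" by (simp add: gt)
    from tendsto_real_sqrt[OF this] show ?thesis by simp
  qed
  have nb: "0 \<le> l2norm (\<lambda>n. S K n - x n) \<and> l2norm (\<lambda>n. S K n - x n) \<le> sqrt (suminf (g K))" if K: "K \<ge> N2" for K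
  proof -
    have le: "(cmod (S K n - x n))^2 \<le> g K n" for n
    proof -
      have "(cmod (S K n - x n))^2 \<le> (if K < n then b n else 0)^2"
        by (rule power_mono[OF db[OF K]]) simp
      thus ?thesis unfolding g_def by (cases "K < n") (simp_all del: norm_le_zero_iff)
    qed
    have s1: "summable (\<lambda>n. (cmod (S K n - x n))^2)"
      by (rule summable_comparison_test[OF _ sg[of K]]) (simp add: le)
    have "(\<Sum>n. (cmod (S K n - x n))^2) \<le> suminf (g K)"
      by (rule suminf_le[OF le s1 sg])
    moreover have "0 \<le> (\<Sum>n. (cmod (S K n - x n))^2)" by (rule suminf_nonneg[OF s1]) simp
    ultimately show ?thesis unfolding l2norm_def by (simp add: real_sqrt_le_mono)
  qed
  have "(\<lambda>K. l2norm (\<lambda>n. S K n - x n)) \<longlonglongrightarrow> 0"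
  proof (rule tendsto_sandwich[OF _ _ tendsto_const tl])
    show "\<forall>\<^sub>F K in sequentially. 0 \<le> l2norm (\<lambda>n. S K n - x n)"
      by (rule eventually_mono[OF eventually_ge_at_top[of N2]]) (use nb in blast)
    show "\<forall>\<^sub>F K in sequentially. l2norm (\<lambda>n. S K n - x n) \<le> sqrt (suminf (g K))"
      by (rule eventually_mono[OF eventually_ge_at_top[of N2]]) (use nb in blast)
  qed
  thus ?thesis using xl2 unfolding l2_lim_def S_def x_def t_def by simp
qed


definition Qg :: "(nat \<Rightarrow> complex) \<Rightarrow> nat \<Rightarrow> real" where
  "Qg g n = (\<Prod>k<n. cmod (g k))"

lemma Qg_pos: "(\<And>k. g k \<noteq> 0) \<Longrightarrow> Qg g n > 0"
  unfolding Qg_def by (rule prod_pos) simp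

lemma Qg_split: "m \<le> n \<Longrightarrow> Qg g n = Qg g m * (\<Prod>j\<in>{m..<n}. cmod (g j))"
  unfolding Qg_def using prod.atLeastLessThan_concat[of 0 m n "\<lambda>k. cmod (g k)"]
  by (simp add: atLeast0LessThan)

lemma Qg_atMost: "(\<Prod>k\<le>n. cmod (g k)) = Qg g (Suc n)"
  unfolding Qg_def by (simp add: lessThan_Suc_atMost)

lemma bound_inv:
  fixes g f :: "nat \<Rightarrow> complex"
  assumes nz: "\<And>k. g k \<noteq> 0" and c1: "c1 > 0" and d1: "d1 \<ge> 0"
    and lo: "\<forall>n>n0. c1 * real n powr (- d1) \<le> (\<Prod>k\<le>n. cmod (g k))"
  shows "\<forall>n\<ge>max (n0+2) M. \<forall>m<M. cmod (\<Prod>j\<in>{m..<n}. 1 / g j) * cmod (f m)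
           \<le> ((\<Sum>i<M. Qg g i * cmod (f i)) / c1) * real n powr d1"
proof (intro allI impI)
  have Qp: "\<And>i. Qg g i > 0" by (rule Qg_pos) (rule nz)
  fix n m assume n: "max (n0+2) M \<le> n" and m: "m < M"
  define G where "G = (\<Sum>i<M. Qg g i * cmod (f i))"
  have mn: "m \<le> n" using n m by simp
  have Qn: "Qg g n \<ge> c1 / real n powr d1"
  proof -
    have "n - 1 > n0" using n by (simp; arith)
    hence "c1 * real (n - 1) powr (- d1) \<le> Qg g n"
      using lo n by (auto simp: Qg_atMost)
    moreover have "real (n - 1) powr d1 \<le> real n powr d1" by (rule powr_mono2) (use d1 in auto)
    moreover have "real (n - 1) > 0" using n by simp
    ultimately have a: "c1 / real (n - 1) powr d1 \<le> Qg g n"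
      and b: "real (n - 1) powr d1 \<le> real n powr d1" and p: "0 < real (n - 1) powr d1"
      by (simp_all add: powr_minus divide_inverse)
    have "c1 / real n powr d1 \<le> c1 / real (n - 1) powr d1"
      by (rule divide_left_mono[OF b]) (use c1 p in auto)
    thus ?thesis using a by linarith
  qed
  have Qnp: "Qg g n > 0" by (rule Qg_pos) (rule nz)
  have "cmod (\<Prod>j\<in>{m..<n}. 1 / g j) = Qg g m / Qg g n"
  proof -
    have "cmod (\<Prod>j\<in>{m..<n}. 1 / g j) = (\<Prod>j\<in>{m..<n}. 1 / cmod (g j))"
      by (simp add: prod_norm[symmetric] norm_divide)
    also have "\<dots> = 1 / (\<Prod>j\<in>{m..<n}. cmod (g j))" by (simp add: prod_dividef)
    also have "\<dots> = Qg g m / Qg g n"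
      using Qg_split[OF mn, of g] Qg_pos[of g m, OF nz] by simp
    finally show ?thesis .
  qed
  hence "cmod (\<Prod>j\<in>{m..<n}. 1 / g j) * cmod (f m) = (Qg g m * cmod (f m)) / Qg g n" by simp
  also have "\<dots> \<le> G / Qg g n"
  proof (rule divide_right_mono)
    show "Qg g m * cmod (f m) \<le> G" unfolding G_def
      by (rule member_le_sum[where f="\<lambda>i. Qg g i * cmod (f i)"])
         (use m in \<open>auto intro!: mult_nonneg_nonneg simp: less_imp_le[OF Qp]\<close>)
  qed (use Qnp in simp)
  also have "\<dots> \<le> G / (c1 / real n powr d1)"
  proof (rule divide_left_mono)
    show "0 \<le> G" unfolding G_def by (rule sum_nonneg) (auto intro!: mult_nonneg_nonneg simp: less_imp_le[OF Qp])
    show "0 < Qg g n * (c1 / real n powr d1)" using Qnp c1 n by simp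
  qed (rule Qn)
  also have "\<dots> = (G / c1) * real n powr d1" by simp
  finally show "cmod (\<Prod>j\<in>{m..<n}. 1 / g j) * cmod (f m) \<le> (G / c1) * real n powr d1" unfolding G_def .
qed

lemma bound_cnj:
  fixes g f :: "nat \<Rightarrow> complex"
  assumes nz: "\<And>k. g k \<noteq> 0" and c2: "c2 > 0" and d2: "d2 \<ge> 0"
    and hi: "\<forall>n>n0. (\<Prod>k\<le>n. cmod (g k)) \<le> c2 * real n powr d2"
  shows "\<forall>n\<ge>max (n0+2) M. \<forall>m<M. cmod (\<Prod>j\<in>{m..<n}. cnj (g j)) * cmod (f m)
           \<le> (c2 * (\<Sum>i<M. cmod (f i) / Qg g i)) * real n powr d2"
proof (intro allI impI)
  have Qp: "\<And>i. Qg g i > 0" by (rule Qg_pos) (rule nz)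
  fix n m assume n: "max (n0+2) M \<le> n" and m: "m < M"
  define G where "G = (\<Sum>i<M. cmod (f i) / Qg g i)"
  have mn: "m \<le> n" using n m by simp
  have Qn: "Qg g n \<le> c2 * real n powr d2"
  proof -
    have "n - 1 > n0" using n by (simp; arith)
    hence "Qg g n \<le> c2 * real (n - 1) powr d2"
      using hi n by (auto simp: Qg_atMost)
    moreover have "real (n - 1) powr d2 \<le> real n powr d2" by (rule powr_mono2) (use d2 in auto)
    moreover have "c2 * real (n - 1) powr d2 \<le> c2 * real n powr d2"
      using calculation(2) c2 by (intro mult_left_mono) auto
    ultimately show ?thesis by linarith
  qed
  have Qmp: "Qg g m > 0" by (rule Qg_pos) (rule nz)
  have "cmod (\<Prod>j\<in>{m..<n}. cnj (g j)) = Qg g n / Qg g m"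
  proof -
    have "cmod (\<Prod>j\<in>{m..<n}. cnj (g j)) = (\<Prod>j\<in>{m..<n}. cmod (g j))"
      by (simp add: prod_norm[symmetric])
    thus ?thesis using Qg_split[OF mn, of g] Qmp by simp
  qed
  hence "cmod (\<Prod>j\<in>{m..<n}. cnj (g j)) * cmod (f m) = Qg g n * (cmod (f m) / Qg g m)" by simp
  also have "\<dots> \<le> (c2 * real n powr d2) * G"
  proof (rule mult_mono[OF Qn])
    show "cmod (f m) / Qg g m \<le> G" unfolding G_def
      by (rule member_le_sum[where f="\<lambda>i. cmod (f i) / Qg g i"])
         (use m Qp in \<open>auto intro: divide_nonneg_pos\<close>)
  qed (use c2 Qmp in simp_all)
  finally show "cmod (\<Prod>j\<in>{m..<n}. cnj (g j)) * cmod (f m) \<le> (c2 * G) * real n powr d2"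
    by (simp add: mult_ac)
qed


lemma l2_shift: "f \<in> l2 \<Longrightarrow> (\<lambda>n. f (Suc n)) \<in> l2"
  unfolding l2_def using summable_Suc_iff[of "\<lambda>n. (cmod (f n))^2"] by simp

lemma dom_X1': "dom (X1 h) = {f \<in> l2. Cop h f \<in> l2}"
  by (auto simp: dom_X1 l2_shift)

lemma l2_sum: "(\<And>k. k \<in> A \<Longrightarrow> F k \<in> l2) \<Longrightarrow> (\<lambda>n. \<Sum>k\<in>A. F k n) \<in> l2"
proof (induction A rule: infinite_finite_induct)
  case (infinite A) then show ?case by (simp add: l2_zero)
next
  case empty then show ?case by (simp add: l2_zero)
next
  case (insert x F) then show ?case by (simp add: l2_add)
qed

lemma l2norm_nonneg: "f \<in> l2 \<Longrightarrow> l2norm f \<ge> 0"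
  unfolding l2norm_def l2_def by (simp add: suminf_nonneg)

lemma CS: assumes "y \<in> l2" "u \<in> l2"
  shows "(\<Sum>n. cmod (y n) * cmod (u n)) \<le> l2norm y * l2norm u"
proof -
  have sy: "summable (\<lambda>n. (cmod (y n))^2)" and su: "summable (\<lambda>n. (cmod (u n))^2)"
    using assms by (auto simp: l2_def)
  have s: "summable (\<lambda>n. cmod (y n) * cmod (u n))"
    using l2_prod_summable[OF assms] by (simp add: norm_mult)
  show ?thesis
  proof (rule suminf_le_const[OF s])
    fix N
    have "(\<Sum>n<N. cmod (y n) * cmod (u n)) = (\<Sum>n<N. \<bar>cmod (y n)\<bar> * \<bar>cmod (u n)\<bar>)" by simp
    also have "\<dots> \<le> L2_set (\<lambda>n. cmod (y n)) {..<N} * L2_set (\<lambda>n. cmod (u n)) {..<N}"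
      by (rule L2_set_mult_ineq)
    also have "\<dots> \<le> l2norm y * l2norm u"
    proof (rule mult_mono)
      show "L2_set (\<lambda>n. cmod (y n)) {..<N} \<le> l2norm y" unfolding L2_set_def l2norm_def
        by (rule real_sqrt_le_mono, rule sum_le_suminf[OF sy]) auto
      show "L2_set (\<lambda>n. cmod (u n)) {..<N} \<le> l2norm u" unfolding L2_set_def l2norm_def
        by (rule real_sqrt_le_mono, rule sum_le_suminf[OF su]) auto
    qed (auto simp: l2norm_nonneg assms L2_set_def intro!: sum_nonneg)
    finally show "(\<Sum>n<N. cmod (y n) * cmod (u n)) \<le> l2norm y * l2norm u" .
  qed
qed

lemma inner_bound: assumes "y \<in> l2" "u \<in> l2" shows "cmod (l2inner y u) \<le> l2norm y * l2norm u"
proof -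
  have s: "summable (\<lambda>n. cmod (cnj (y n) * u n))" by (rule l2_prod_summable[OF assms])
  have "cmod (l2inner y u) \<le> (\<Sum>n. cmod (cnj (y n) * u n))"
    unfolding l2inner_def by (rule summable_norm[OF s])
  also have "\<dots> = (\<Sum>n. cmod (y n) * cmod (u n))" by (simp add: norm_mult)
  also have "\<dots> \<le> l2norm y * l2norm u" by (rule CS[OF assms])
  finally show ?thesis .
qed

lemma inner_diff_left: "a \<in> l2 \<Longrightarrow> b \<in> l2 \<Longrightarrow> u \<in> l2 \<Longrightarrow>
   l2inner (\<lambda>n. a n - b n) u = l2inner a u - l2inner b u"
  unfolding l2inner_def
  by (simp add: left_diff_distrib suminf_diff l2_prod_summable')

lemma inner_diff_right: "a \<in> l2 \<Longrightarrow> b \<in> l2 \<Longrightarrow> u \<in> l2 \<Longrightarrow>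
   l2inner u (\<lambda>n. a n - b n) = l2inner u a - l2inner u b"
  unfolding l2inner_def
  by (simp add: right_diff_distrib suminf_diff l2_prod_summable')

lemma inner_add_left: "a \<in> l2 \<Longrightarrow> b \<in> l2 \<Longrightarrow> u \<in> l2 \<Longrightarrow>
   l2inner (\<lambda>n. a n + b n) u = l2inner a u + l2inner b u"
  unfolding l2inner_def
  by (simp add: distrib_right suminf_add l2_prod_summable')

lemma inner_add_right: "a \<in> l2 \<Longrightarrow> b \<in> l2 \<Longrightarrow> u \<in> l2 \<Longrightarrow>
   l2inner u (\<lambda>n. a n + b n) = l2inner u a + l2inner u b"
  unfolding l2inner_def
  by (simp add: distrib_left suminf_add l2_prod_summable')

lemma inner_scale_left: "a \<in> l2 \<Longrightarrow> u \<in> l2 \<Longrightarrow> l2inner (\<lambda>n. c * a n) u = cnj c * l2inner a u"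
  unfolding l2inner_def by (simp add: mult.assoc suminf_mult l2_prod_summable')

lemma inner_scale_right: "a \<in> l2 \<Longrightarrow> u \<in> l2 \<Longrightarrow> l2inner u (\<lambda>n. c * a n) = c * l2inner u a"
  unfolding l2inner_def by (simp add: mult.left_commute suminf_mult l2_prod_summable')

lemma inner_sum_left: assumes "finite A" "\<And>k. k \<in> A \<Longrightarrow> F k \<in> l2" "u \<in> l2"
  shows "l2inner (\<lambda>n. \<Sum>k\<in>A. F k n) u = (\<Sum>k\<in>A. l2inner (F k) u)"
  using assms
proof (induction A rule: finite_induct)
  case empty then show ?case by (simp add: l2inner_def)
next
  case (insert x A)
  have "l2inner (\<lambda>n. \<Sum>k\<in>insert x A. F k n) u = l2inner (\<lambda>n. F x n + (\<Sum>k\<in>A. F k n)) u"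
    using insert by simp
  also have "\<dots> = l2inner (F x) u + l2inner (\<lambda>n. \<Sum>k\<in>A. F k n) u"
    by (rule inner_add_left) (use insert in \<open>auto intro: l2_sum\<close>)
  finally show ?case using insert by simp
qed

lemma inner_sum_right: assumes "finite A" "\<And>k. k \<in> A \<Longrightarrow> F k \<in> l2" "u \<in> l2"
  shows "l2inner u (\<lambda>n. \<Sum>k\<in>A. F k n) = (\<Sum>k\<in>A. l2inner u (F k))"
  using assms
proof (induction A rule: finite_induct)
  case empty then show ?case by (simp add: l2inner_def)
next
  case (insert x A)
  have "l2inner u (\<lambda>n. \<Sum>k\<in>insert x A. F k n) = l2inner u (\<lambda>n. F x n + (\<Sum>k\<in>A. F k n))"
    using insert by simp
  also have "\<dots> = l2inner u (F x) + l2inner u (\<lambda>n. \<Sum>k\<in>A. F k n)"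
    by (rule inner_add_right) (use insert in \<open>auto intro: l2_sum\<close>)
  finally show ?case using insert by simp
qed

lemma inner_lim_left: assumes "\<And>K. S K \<in> l2" "l2_lim S x" "u \<in> l2"
  shows "(\<lambda>K. l2inner (S K) u) \<longlonglongrightarrow> l2inner x u"
proof -
  have x: "x \<in> l2" and t: "(\<lambda>K. l2norm (\<lambda>n. S K n - x n)) \<longlonglongrightarrow> 0"
    using assms(2) by (auto simp: l2_lim_def)
  have b: "norm (l2inner (S K) u - l2inner x u) \<le> l2norm (\<lambda>n. S K n - x n) * l2norm u" for K
  proof -
    have "l2inner (S K) u - l2inner x u = l2inner (\<lambda>n. S K n - x n) u"
      by (rule inner_diff_left[symmetric]) (use assms x in auto)
    thus ?thesis using inner_bound[OF l2_diff[OF assms(1) x] assms(3)] by simp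
  qed
  have t2: "(\<lambda>K. l2norm (\<lambda>n. S K n - x n) * l2norm u) \<longlonglongrightarrow> 0"
    using tendsto_mult[OF t tendsto_const[of "l2norm u"]] by simp
  have "(\<lambda>K. l2inner (S K) u - l2inner x u) \<longlonglongrightarrow> 0"
    by (rule tendsto_norm_zero_cancel, rule tendsto_sandwich[OF _ _ tendsto_const t2])
       (use b in auto)
  thus ?thesis by (simp add: LIM_zero_cancel)
qed

lemma suminf_cnj': "summable h \<Longrightarrow> (\<Sum>n. cnj (h n)) = cnj (suminf h)"
  by (rule sums_unique[symmetric]) (simp add: sums_cnj summable_sums)

lemma inner_cnj: "f \<in> l2 \<Longrightarrow> u \<in> l2 \<Longrightarrow> l2inner u f = cnj (l2inner f u)"
  unfolding l2inner_def
  using suminf_cnj'[OF l2_prod_summable'[of f u]] by (simp add: mult.commute)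

lemma inner_lim_right: assumes "\<And>K. S K \<in> l2" "l2_lim S x" "u \<in> l2"
  shows "(\<lambda>K. l2inner u (S K)) \<longlonglongrightarrow> l2inner u x"
proof -
  have x: "x \<in> l2" using assms(2) by (auto simp: l2_lim_def)
  have "(\<lambda>K. cnj (l2inner (S K) u)) \<longlonglongrightarrow> cnj (l2inner x u)"
    by (rule tendsto_cnj, rule inner_lim_left[OF assms])
  thus ?thesis using inner_cnj[OF assms(1) assms(3)] inner_cnj[OF x assms(3)] by simp
qed


lemma dom_pow_char: "f \<in> dom (op_pow A k) \<longleftrightarrow> f \<in> l2 \<and> (\<forall>j<k. (app A ^^ j) f \<in> dom A)"
proof (induction k)
  case 0 then show ?case by (simp add: op_id_def dom_def)
next
  case (Suc k)
  have "f \<in> dom (op_pow A (Suc k)) \<longleftrightarrow> f \<in> dom (op_pow A k) \<and> (app A ^^ k) f \<in> dom A"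
    by (simp only: dom_powS) simp
  also have "\<dots> \<longleftrightarrow> f \<in> l2 \<and> (\<forall>j<Suc k. (app A ^^ j) f \<in> dom A)"
    using Suc by (auto simp: less_Suc_eq)
  finally show ?case .
qed

lemma Dinf_pow:
  assumes lin: "\<And>f g. C (\<lambda>n. f n - g n) = (\<lambda>n. C f n - C g n)"
    and domA: "dom A = {f\<in>l2. C f \<in> l2}"
    and appA: "\<And>f. app A f = (\<lambda>n. f n - C f n)"
    and f: "\<forall>k. f \<in> dom (op_pow A k)"
  shows "(C ^^ k) f \<in> l2"
proof -
  define P where "P f \<longleftrightarrow> f \<in> l2 \<and> (\<forall>j. (app A ^^ j) f \<in> l2 \<and> C ((app A ^^ j) f) \<in> l2)" for f
  have comm: "C ((app A ^^ j) f) = (app A ^^ j) (C f)" for j f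
  proof (induction j)
    case 0 then show ?case by simp
  next
    case (Suc j)
    have "C ((app A ^^ Suc j) f) = C (\<lambda>n. (app A ^^ j) f n - C ((app A ^^ j) f) n)"
      by (simp add: appA)
    also have "\<dots> = (\<lambda>n. C ((app A ^^ j) f) n - C (C ((app A ^^ j) f)) n)" by (rule lin)
    also have "\<dots> = app A (C ((app A ^^ j) f))" by (simp add: appA)
    also have "\<dots> = (app A ^^ Suc j) (C f)" using Suc by simp
    finally show ?case .
  qed
  have step: "C ((app A ^^ j) f) = (\<lambda>n. (app A ^^ j) f n - (app A ^^ Suc j) f n)" for j f
    by (simp add: appA)
  have P0: "P f"
  proof -
    have "(app A ^^ j) f \<in> dom A" for j
    proof -
      have "f \<in> dom (op_pow A (Suc j))" using f by blast
      thus ?thesis using dom_pow_char[of f A "Suc j"] lessI[of j] by blast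
    qed
    moreover have "f \<in> l2"
    proof -
      have "f \<in> dom (op_pow A 0)" using f by blast
      thus ?thesis using dom_pow_char[of f A 0] by blast
    qed
    ultimately show ?thesis unfolding P_def domA by auto
  qed
  have PC: "P (C f)" if "P f" for f
  proof -
    have a: "(app A ^^ j) f \<in> l2" "C ((app A ^^ j) f) \<in> l2" for j using that by (auto simp: P_def)
    have "C f \<in> l2" using a(2)[of 0] by simp
    moreover have "(app A ^^ j) (C f) \<in> l2" for j using a(2)[of j] by (simp add: comm)
    moreover have "C ((app A ^^ j) (C f)) \<in> l2" for j
    proof -
      have "C ((app A ^^ j) (C f)) = C (C ((app A ^^ j) f))" by (simp add: comm)
      also have "\<dots> = (\<lambda>n. C ((app A ^^ j) f) n - C ((app A ^^ Suc j) f) n)"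
        by (simp only: step[of j f] lin)
      finally show ?thesis using l2_diff[OF a(2)[of j] a(2)[of "Suc j"]] by simp
    qed
    ultimately show ?thesis by (simp add: P_def)
  qed
  have "P ((C ^^ k) f)" by (induction k) (auto simp: P0 PC)
  thus ?thesis by (simp add: P_def)
qed

lemma Cop_lin: "Cop h (\<lambda>n. f n - g n) = (\<lambda>n. Cop h f n - Cop h g n)"
  by (simp add: Cop_def right_diff_distrib)
lemma Bop_lin: "Bop w (\<lambda>n. f n - g n) = (\<lambda>n. Bop w f n - Bop w g n)"
  by (auto simp: Bop_def right_diff_distrib)

lemma X1_pow_l2: "f \<in> log_dom (X1 h) \<Longrightarrow> (Cop h ^^ k) f \<in> l2"
  by (rule Dinf_pow[OF Cop_lin dom_X1' app_X1]) (simp add: log_dom_def)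
lemma X2_pow_l2: "f \<in> log_dom (X2 h) \<Longrightarrow> (Bop (\<lambda>n. 1 / h n) ^^ k) f \<in> l2"
  by (rule Dinf_pow[OF Bop_lin dom_X2 app_X2]) (simp add: log_dom_def)

lemma log_dom_l2: "f \<in> log_dom A \<Longrightarrow> f \<in> l2"
proof -
  assume "f \<in> log_dom A"
  hence "f \<in> dom (op_pow A 0)" unfolding log_dom_def by blast
  thus ?thesis using dom_pow_char[of f A 0] by blast
qed

lemma X1_partial_l2: "f \<in> log_dom (X1 h) \<Longrightarrow> log_partial (X1 h) f K \<in> l2"
  unfolding log_partial_X1 by (intro l2_sum l2_scale X1_pow_l2)
lemma X2_partial_l2: "f \<in> log_dom (X2 h) \<Longrightarrow> log_partial (X2 h) f K \<in> l2"
  unfolding log_partial_X2 by (intro l2_sum l2_scale X2_pow_l2)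

definition LimX :: "op \<Rightarrow> seq \<Rightarrow> seq" where
  "LimX X f = (THE x. l2_lim (log_partial X f) x)"

lemma app_log: "app (op_log X) f = (\<lambda>n. - LimX X f n)"
  by (simp add: op_log_def app_def LimX_def)
lemma dom_log: "dom (op_log X) = log_dom X"
  by (simp add: op_log_def dom_def)

lemma LimX_X1: assumes "f \<in> log_dom (X1 h)" shows "l2_lim (log_partial (X1 h) f) (LimX (X1 h) f)"
proof -
  obtain x where x: "l2_lim (log_partial (X1 h) f) x" using assms by (auto simp: log_dom_def)
  have "LimX (X1 h) f = x" unfolding LimX_def by (rule l2_lim_the[OF X1_partial_l2[OF assms] x])
  thus ?thesis using x by simp
qed
lemma LimX_X2: assumes "f \<in> log_dom (X2 h)" shows "l2_lim (log_partial (X2 h) f) (LimX (X2 h) f)"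
proof -
  obtain x where x: "l2_lim (log_partial (X2 h) f) x" using assms by (auto simp: log_dom_def)
  have "LimX (X2 h) f = x" unfolding LimX_def by (rule l2_lim_the[OF X2_partial_l2[OF assms] x])
  thus ?thesis using x by simp
qed

lemma adj1: assumes "a \<in> l2" "b \<in> l2" "Cop h a \<in> l2" "Bop (\<lambda>n. cnj (h n)) b \<in> l2"
  shows "l2inner (Cop h a) b = l2inner a (Bop (\<lambda>n. cnj (h n)) b)"
proof -
  define F where "F n = cnj (a n) * Bop (\<lambda>n. cnj (h n)) b n" for n
  have sF: "summable F" unfolding F_def by (rule l2_prod_summable'[OF assms(1,4)])
  have "l2inner a (Bop (\<lambda>n. cnj (h n)) b) = suminf F" unfolding l2inner_def F_def by (rule refl)
  also have "\<dots> = (\<Sum>n. F (Suc n))" using suminf_split_head[OF sF] by (simp add: F_def Bop_def)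
  also have "\<dots> = l2inner (Cop h a) b"
    by (simp add: l2inner_def F_def Bop_def Cop_def mult.commute mult.left_commute)
  finally show ?thesis by simp
qed

lemma adj_pow: assumes "a \<in> l2" "\<And>j. (Cop h ^^ j) a \<in> l2" "\<And>j. (Bop (\<lambda>n. cnj (h n)) ^^ j) b \<in> l2"
  shows "l2inner ((Cop h ^^ k) a) b = l2inner a ((Bop (\<lambda>n. cnj (h n)) ^^ k) b)"
  using assms(3)
proof (induction k arbitrary: b)
  case 0 then show ?case by simp
next
  case (Suc k)
  have b0: "b \<in> l2" using Suc.prems[of 0] by simp
  have "l2inner ((Cop h ^^ Suc k) a) b = l2inner (Cop h ((Cop h ^^ k) a)) b" by simp
  also have "\<dots> = l2inner ((Cop h ^^ k) a) (Bop (\<lambda>n. cnj (h n)) b)"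
    by (rule adj1) (use assms(2)[of k] assms(2)[of "Suc k"] b0 Suc.prems[of 1] in simp_all)
  also have "\<dots> = l2inner a ((Bop (\<lambda>n. cnj (h n)) ^^ k) (Bop (\<lambda>n. cnj (h n)) b))"
  proof (rule Suc.IH)
    fix j
    have "(Bop (\<lambda>n. cnj (h n)) ^^ Suc j) b \<in> l2" by (rule Suc.prems)
    thus "(Bop (\<lambda>n. cnj (h n)) ^^ j) (Bop (\<lambda>n. cnj (h n)) b) \<in> l2"
      by (simp only: funpow_Suc_right comp_def)
  qed
  also have "\<dots> = l2inner a ((Bop (\<lambda>n. cnj (h n)) ^^ Suc k) b)"
    by (simp add: funpow_Suc_right del: funpow.simps)
  finally show ?case .
qed

lemma adj_lim:
  assumes f: "f \<in> log_dom (X1 h)" and u: "u \<in> log_dom (X2 h2)"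
    and w: "(\<lambda>n. 1 / h2 n) = (\<lambda>n. cnj (h n))"
  shows "l2inner (LimX (X1 h) f) u = l2inner f (LimX (X2 h2) u)"
proof -
  have fl: "f \<in> l2" and ul: "u \<in> l2" using f u log_dom_l2 by auto
  have Cf: "(Cop h ^^ j) f \<in> l2" for j by (rule X1_pow_l2[OF f])
  have Bu: "(Bop (\<lambda>n. cnj (h n)) ^^ j) u \<in> l2" for j using X2_pow_l2[OF u, of j] w by simp
  have eq: "l2inner (log_partial (X1 h) f K) u = l2inner f (log_partial (X2 h2) u K)" for K
  proof -
    have "l2inner (log_partial (X1 h) f K) u = (\<Sum>k=1..K. l2inner (\<lambda>n. 1 / of_nat k * (Cop h ^^ k) f n) u)"
      unfolding log_partial_X1 by (rule inner_sum_left, rule finite_atLeastAtMost, rule l2_scale[OF Cf], rule ul)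
    also have "\<dots> = (\<Sum>k=1..K. 1 / of_nat k * l2inner ((Cop h ^^ k) f) u)"
      by (rule sum.cong[OF refl]) (subst inner_scale_left[OF Cf ul], simp)
    also have "\<dots> = (\<Sum>k=1..K. 1 / of_nat k * l2inner f ((Bop (\<lambda>n. cnj (h n)) ^^ k) u))"
      by (rule sum.cong) (simp_all add: adj_pow[OF fl Cf Bu])
    also have "\<dots> = (\<Sum>k=1..K. l2inner f (\<lambda>n. 1 / of_nat k * (Bop (\<lambda>n. cnj (h n)) ^^ k) u n))"
      by (rule sum.cong[OF refl]) (subst inner_scale_right[OF Bu fl], rule refl)
    also have "\<dots> = l2inner f (log_partial (X2 h2) u K)"
      unfolding log_partial_X2 w by (rule inner_sum_right[symmetric], rule finite_atLeastAtMost, rule l2_scale[OF Bu], rule fl)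
    finally show ?thesis .
  qed
  have t1: "(\<lambda>K. l2inner (log_partial (X1 h) f K) u) \<longlonglongrightarrow> l2inner (LimX (X1 h) f) u"
    by (rule inner_lim_left[OF X1_partial_l2[OF f] LimX_X1[OF f] ul])
  have t2: "(\<lambda>K. l2inner f (log_partial (X2 h2) u K)) \<longlonglongrightarrow> l2inner f (LimX (X2 h2) u)"
    by (rule inner_lim_right[OF X2_partial_l2[OF u] LimX_X2[OF u] fl])
  show ?thesis using t1 t2 eq LIMSEQ_unique by simp
qed


lemma fin_log_X1: assumes M: "\<forall>m\<ge>M. f m = 0"
  shows "f \<in> log_dom (X1 h) \<and> LimX (X1 h) f = (\<lambda>n. \<Sum>k=1..M. 1 / of_nat k * (Cop h ^^ k) f n)"
proof -
  have f: "fin f" using M by (auto simp: fin_def)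
  have d: "\<forall>k. f \<in> dom (op_pow (X1 h) k)" using fin_pow_dom[OF fin_X1 f] by blast
  have l: "l2_lim (log_partial (X1 h) f) (\<lambda>n. \<Sum>k=1..M. 1 / of_nat k * (Cop h ^^ k) f n)"
    by (rule X1_lim_fin[OF M])
  have ld: "f \<in> log_dom (X1 h)" using d l by (auto simp: log_dom_def)
  have "LimX (X1 h) f = (\<lambda>n. \<Sum>k=1..M. 1 / of_nat k * (Cop h ^^ k) f n)"
    unfolding LimX_def by (rule l2_lim_the[OF X1_partial_l2[OF ld] l])
  thus ?thesis using ld by simp
qed

lemma fin_log_X2:
  assumes M: "\<forall>m\<ge>M. f m = 0" and F0: "F \<ge> 0" and dd: "d < 1/2"
    and bnd: "\<forall>n\<ge>N1. \<forall>m<M. cmod (\<Prod>j\<in>{m..<n}. 1 / h j) * cmod (f m) \<le> F * real n powr d"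
  shows "f \<in> log_dom (X2 h) \<and> LimX (X2 h) f = (\<lambda>n. \<Sum>k=1..n. 1 / of_nat k * (Bop (\<lambda>n. 1 / h n) ^^ k) f n)"
proof -
  have f: "fin f" using M by (auto simp: fin_def)
  have d: "\<forall>k. f \<in> dom (op_pow (X2 h) k)" using fin_pow_dom[OF fin_X2 f] by blast
  have l: "l2_lim (log_partial (X2 h) f) (\<lambda>n. \<Sum>k=1..n. 1 / of_nat k * (Bop (\<lambda>n. 1 / h n) ^^ k) f n)"
    unfolding log_partial_X2 by (rule Blim[OF M F0 dd bnd])
  have ld: "f \<in> log_dom (X2 h)" using d l by (auto simp: log_dom_def)
  have "LimX (X2 h) f = (\<lambda>n. \<Sum>k=1..n. 1 / of_nat k * (Bop (\<lambda>n. 1 / h n) ^^ k) f n)"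
    unfolding LimX_def by (rule l2_lim_the[OF X2_partial_l2[OF ld] l])
  thus ?thesis using ld by simp
qed

definition Top :: "(nat \<Rightarrow> complex) \<Rightarrow> op" where
  "Top g = op_scale (1/2) (op_add (L_op g) (L_op (\<lambda>n. 1 / cnj (g n))))"

lemma dom_T: "dom (Top g) = log_dom (X1 g) \<inter> log_dom (X2 g) \<inter>
   log_dom (X1 (\<lambda>n. 1 / cnj (g n))) \<inter> log_dom (X2 (\<lambda>n. 1 / cnj (g n)))"
  by (auto simp: Top_def L_op_X op_scale_def op_add_def op_diff_def dom_def op_log_def)

lemma app_T: "app (Top g) f = (\<lambda>n. \<i> / 2 * (LimX (X2 g) f n - LimX (X1 g) f n
     + LimX (X2 (\<lambda>n. 1 / cnj (g n))) f n - LimX (X1 (\<lambda>n. 1 / cnj (g n))) f n))"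
  by (simp add: Top_def L_op_X op_scale_def op_add_def op_diff_def app_def op_log_def LimX_def
      algebra_simps)

lemma LimX1_l2: "f \<in> log_dom (X1 h) \<Longrightarrow> LimX (X1 h) f \<in> l2"
  using LimX_X1 by (auto simp: l2_lim_def)
lemma LimX2_l2: "f \<in> log_dom (X2 h) \<Longrightarrow> LimX (X2 h) f \<in> l2"
  using LimX_X2 by (auto simp: l2_lim_def)

lemma inner_comb_left:
  assumes "A \<in> l2" "B \<in> l2" "C \<in> l2" "D \<in> l2" "u \<in> l2"
  shows "l2inner (\<lambda>n. c * (A n - B n + C n - D n)) u
     = cnj c * (l2inner A u - l2inner B u + l2inner C u - l2inner D u)"
proof -
  have ab: "(\<lambda>n. A n - B n) \<in> l2" by (rule l2_diff[OF assms(1,2)])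
  have abc: "(\<lambda>n. A n - B n + C n) \<in> l2" by (rule l2_add[OF ab assms(3)])
  have abcd: "(\<lambda>n. A n - B n + C n - D n) \<in> l2" by (rule l2_diff[OF abc assms(4)])
  have "l2inner (\<lambda>n. c * (A n - B n + C n - D n)) u = cnj c * l2inner (\<lambda>n. A n - B n + C n - D n) u"
    by (rule inner_scale_left[OF abcd assms(5)])
  also have "l2inner (\<lambda>n. A n - B n + C n - D n) u = l2inner (\<lambda>n. A n - B n + C n) u - l2inner D u"
    by (rule inner_diff_left[OF abc assms(4,5)])
  also have "l2inner (\<lambda>n. A n - B n + C n) u = l2inner (\<lambda>n. A n - B n) u + l2inner C u"
    by (rule inner_add_left[OF ab assms(3,5)])
  also have "l2inner (\<lambda>n. A n - B n) u = l2inner A u - l2inner B u"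
    by (rule inner_diff_left[OF assms(1,2,5)])
  finally show ?thesis .
qed

lemma inner_comb_right:
  assumes "A \<in> l2" "B \<in> l2" "C \<in> l2" "D \<in> l2" "u \<in> l2"
  shows "l2inner u (\<lambda>n. c * (A n - B n + C n - D n))
     = c * (l2inner u A - l2inner u B + l2inner u C - l2inner u D)"
proof -
  have ab: "(\<lambda>n. A n - B n) \<in> l2" by (rule l2_diff[OF assms(1,2)])
  have abc: "(\<lambda>n. A n - B n + C n) \<in> l2" by (rule l2_add[OF ab assms(3)])
  have abcd: "(\<lambda>n. A n - B n + C n - D n) \<in> l2" by (rule l2_diff[OF abc assms(4)])
  have "l2inner u (\<lambda>n. c * (A n - B n + C n - D n)) = c * l2inner u (\<lambda>n. A n - B n + C n - D n)"
    by (rule inner_scale_right[OF abcd assms(5)])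
  also have "l2inner u (\<lambda>n. A n - B n + C n - D n) = l2inner u (\<lambda>n. A n - B n + C n) - l2inner u D"
    by (rule inner_diff_right[OF abc assms(4,5)])
  also have "l2inner u (\<lambda>n. A n - B n + C n) = l2inner u (\<lambda>n. A n - B n) + l2inner u C"
    by (rule inner_add_right[OF ab assms(3,5)])
  also have "l2inner u (\<lambda>n. A n - B n) = l2inner u A - l2inner u B"
    by (rule inner_diff_right[OF assms(1,2,5)])
  finally show ?thesis .
qed

lemma T_symmetric: assumes nz: "\<And>k. g k \<noteq> 0" shows "symmetric_op (Top g)"
proof -
  define g' where "g' = (\<lambda>n. 1 / cnj (g n))"
  have w1: "(\<lambda>n. 1 / g' n) = (\<lambda>n. cnj (g n))" by (simp add: g'_def)
  have w2: "(\<lambda>n. 1 / g n) = (\<lambda>n. cnj (g' n))" by (simp add: g'_def)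
  have domT: "dom (Top g) = log_dom (X1 g) \<inter> log_dom (X2 g) \<inter> log_dom (X1 g') \<inter> log_dom (X2 g')"
    by (simp add: dom_T g'_def)
  have appT: "app (Top g) f = (\<lambda>n. \<i> / 2 * (LimX (X2 g) f n - LimX (X1 g) f n
     + LimX (X2 g') f n - LimX (X1 g') f n))" for f by (simp add: app_T g'_def)
  have sub: "dom (Top g) \<subseteq> l2" unfolding domT using log_dom_l2 by blast
  have l2s: "LimX (X2 g) f \<in> l2" "LimX (X1 g) f \<in> l2" "LimX (X2 g') f \<in> l2" "LimX (X1 g') f \<in> l2"
    if "f \<in> dom (Top g)" for f using that unfolding domT by (auto intro: LimX1_l2 LimX2_l2)
  have Tl2: "app (Top g) f \<in> l2" if "f \<in> dom (Top g)" for f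
    unfolding appT using l2s[OF that]
    by (intro l2_scale l2_diff l2_add) auto
  have sym: "l2inner (app (Top g) f) u = l2inner f (app (Top g) u)"
    if f: "f \<in> dom (Top g)" and u: "u \<in> dom (Top g)" for f u
  proof -
    have fl: "f \<in> l2" and ul: "u \<in> l2" using sub f u by auto
    note lf = l2s[OF f] and lu = l2s[OF u]
    have fd: "f \<in> log_dom (X1 g)" "f \<in> log_dom (X2 g)" "f \<in> log_dom (X1 g')" "f \<in> log_dom (X2 g')"
      using f unfolding domT by auto
    have ud: "u \<in> log_dom (X1 g)" "u \<in> log_dom (X2 g)" "u \<in> log_dom (X1 g')" "u \<in> log_dom (X2 g')"
      using u unfolding domT by auto
    have e1: "l2inner (LimX (X1 g) f) u = l2inner f (LimX (X2 g') u)"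
      by (rule adj_lim[OF fd(1) ud(4) w1])
    have e2: "l2inner (LimX (X1 g') f) u = l2inner f (LimX (X2 g) u)"
      by (rule adj_lim[OF fd(3) ud(2) w2])
    have e3: "l2inner (LimX (X2 g) f) u = l2inner f (LimX (X1 g') u)"
    proof -
      have "l2inner (LimX (X1 g') u) f = l2inner u (LimX (X2 g) f)"
        by (rule adj_lim[OF ud(3) fd(2) w2])
      thus ?thesis using inner_cnj[OF lf(1) ul] inner_cnj[OF fl lu(4)] by simp
    qed
    have e4: "l2inner (LimX (X2 g') f) u = l2inner f (LimX (X1 g) u)"
    proof -
      have "l2inner (LimX (X1 g) u) f = l2inner u (LimX (X2 g') f)"
        by (rule adj_lim[OF ud(1) fd(4) w1])
      thus ?thesis using inner_cnj[OF lf(3) ul] inner_cnj[OF fl lu(2)] by simp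
    qed
    show ?thesis unfolding appT inner_comb_left[OF lf ul] inner_comb_right[OF lu fl] e1 e2 e3 e4
      by (simp add: algebra_simps)
  qed
  show ?thesis unfolding symmetric_op_def using sub Tl2 sym by blast
qed


locale hyp =
  fixes g :: "nat \<Rightarrow> complex" and n0 :: nat and c1 c2 d1 d2 :: real
  assumes nz: "\<And>k. g k \<noteq> 0" and c1: "c1 > 0" and c2: "c2 > 0"
    and d1: "0 < d1" "d1 < 1/2" and d2: "0 < d2" "d2 < 1/2"
    and lo: "\<forall>n>n0. c1 * real n powr (- d1) \<le> (\<Prod>k\<le>n. cmod (g k))"
    and hi: "\<forall>n>n0. (\<Prod>k\<le>n. cmod (g k)) \<le> c2 * real n powr d2"
begin

definition g' where "g' = (\<lambda>n. 1 / cnj (g n))"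

lemma w1: "(\<lambda>n. 1 / g' n) = (\<lambda>n. cnj (g n))" by (simp add: g'_def)

lemma Qp: "Qg g i > 0" by (rule Qg_pos) (rule nz)

lemma fin_X2g: assumes M: "\<forall>m\<ge>M. f m = 0"
  shows "f \<in> log_dom (X2 g) \<and> LimX (X2 g) f = (\<lambda>n. \<Sum>k=1..n. 1 / of_nat k * (Bop (\<lambda>n. 1 / g n) ^^ k) f n)"
proof (rule fin_log_X2[OF M _ d1(2) bound_inv[OF nz c1 _ lo]])
  show "0 \<le> (\<Sum>i<M. Qg g i * cmod (f i)) / c1"
    using c1 by (auto intro!: divide_nonneg_pos sum_nonneg mult_nonneg_nonneg simp: less_imp_le[OF Qp])
  show "0 \<le> d1" using d1 by simp
qed

lemma fin_X2g': assumes M: "\<forall>m\<ge>M. f m = 0"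
  shows "f \<in> log_dom (X2 g') \<and> LimX (X2 g') f = (\<lambda>n. \<Sum>k=1..n. 1 / of_nat k * (Bop (\<lambda>n. cnj (g n)) ^^ k) f n)"
proof -
  have "f \<in> log_dom (X2 g') \<and> LimX (X2 g') f = (\<lambda>n. \<Sum>k=1..n. 1 / of_nat k * (Bop (\<lambda>n. 1 / g' n) ^^ k) f n)"
  proof (rule fin_log_X2[OF M _ d2(2)])
    show "0 \<le> c2 * (\<Sum>i<M. cmod (f i) / Qg g i)"
      using c2 by (auto intro!: mult_nonneg_nonneg sum_nonneg divide_nonneg_pos simp: Qp)
    show "\<forall>n\<ge>max (n0+2) M. \<forall>m<M. cmod (\<Prod>j\<in>{m..<n}. 1 / g' j) * cmod (f m)
           \<le> (c2 * (\<Sum>i<M. cmod (f i) / Qg g i)) * real n powr d2"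
      using bound_cnj[OF nz c2 _ hi, of M f] d2 by (simp add: g'_def)
  qed
  thus ?thesis by (simp add: w1)
qed

lemma fin_domT: assumes "fin f" shows "f \<in> dom (Top g)"
proof -
  obtain M where M: "\<forall>m\<ge>M. f m = 0" using assms by (auto simp: fin_def)
  show ?thesis unfolding dom_T g'_def[symmetric]
    using fin_log_X1[OF M] fin_X2g[OF M] fin_X2g'[OF M] by blast
qed

lemma dense: "densely_defined (Top g)"
  unfolding densely_defined_def
proof (intro ballI allI impI)
  fix f e assume f: "f \<in> l2" and e: "(e::real) > 0"
  define F where "F = (\<lambda>n. (cmod (f n))^2)"
  have sF: "summable F" using f by (simp add: l2_def F_def)
  have "(\<lambda>K. \<Sum>n. F (n + K)) \<longlonglongrightarrow> 0" by (rule tail_tendsto[OF sF])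
  then obtain N where N: "\<bar>(\<Sum>n. F (n + N))\<bar> < e^2"
    using e LIMSEQ_D[of "\<lambda>K. \<Sum>n. F (n + K)" 0 "e^2"] by fastforce
  define t where "t = (\<lambda>n. if n < N then f n else 0)"
  have tf: "fin t" unfolding fin_def t_def by (rule exI[of _ N]) simp
  define G where "G = (\<lambda>n. if n < N then 0 else F n)"
  have sG: "summable G" by (rule summable_comparison_test[OF _ sF]) (simp add: G_def F_def)
  have "(\<lambda>n. (cmod (f n - t n))^2) = G" by (auto simp: G_def F_def t_def)
  hence "l2norm (\<lambda>n. f n - t n) = sqrt (suminf G)" by (simp add: l2norm_def)
  also have "suminf G = (\<Sum>n. F (n + N))"
    using suminf_split_initial_segment[OF sG, of N] by (simp add: G_def)
  also have "sqrt (\<Sum>n. F (n + N)) < sqrt (e^2)" using N by (intro real_sqrt_less_mono) linarith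
  also have "sqrt (e^2) = e" using e by simp
  finally show "\<exists>g\<in>dom (Top g). l2norm (\<lambda>n. f n - g n) < e" using fin_domT[OF tf] by blast
qed

end


definition Pp :: "(nat \<Rightarrow> complex) \<Rightarrow> nat \<Rightarrow> complex" where
  "Pp h m = (\<Prod>j<m. h j)"

lemma Pp_nz: "(\<And>j. h j \<noteq> 0) \<Longrightarrow> Pp h m \<noteq> 0"
  unfolding Pp_def by simp

lemma Pp_split: "m \<le> n \<Longrightarrow> Pp h n = Pp h m * (\<Prod>j\<in>{m..<n}. h j)"
  unfolding Pp_def using prod.atLeastLessThan_concat[of 0 m n h]
  by (simp add: atLeast0LessThan)

lemma Pp_down: assumes nz: "\<And>j. h j \<noteq> 0" and k: "k \<le> n"
  shows "Pp h n * (\<Prod>j\<in>{n-k..<n}. 1 / h j) = Pp h (n - k)"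
proof -
  have "Pp h n = Pp h (n - k) * (\<Prod>j\<in>{n-k..<n}. h j)" by (rule Pp_split) simp
  moreover have "(\<Prod>j\<in>{n-k..<n}. 1 / h j) = 1 / (\<Prod>j\<in>{n-k..<n}. h j)"
    by (simp add: prod_dividef)
  moreover have "(\<Prod>j\<in>{n-k..<n}. h j) \<noteq> 0" using nz by simp
  ultimately show ?thesis by simp
qed

lemma Pp_up: "Pp h n * (\<Prod>j\<in>{n..<n+k}. h j) = Pp h (n + k)"
  using Pp_split[of n "n+k" h] by simp

lemma reflect_sum: "(\<Sum>k\<in>{1..n::nat}. \<phi> (n - k)) = (\<Sum>m<n. (\<phi> m :: 'a::comm_monoid_add))"
proof -
  have "(\<Sum>k\<in>{1..n}. \<phi> (n - k)) = (\<Sum>i<n. \<phi> (n - Suc i))" by (simp add: sum.atLeast1_atMost_eq)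
  also have "\<dots> = (\<Sum>m<n. \<phi> m)" by (rule sum.nat_diff_reindex)
  finally show ?thesis .
qed

lemma pair_identity:
  assumes nz: "\<And>j. h j \<noteq> 0" and M: "\<forall>m\<ge>3. f m = 0" and a: "(\<Sum>m<3. Pp h m * f m) = 0"
  shows "(\<Sum>k=1..n. (\<Prod>j\<in>{n-k..<n}. 1 / h j) * f (n - k))
       + (\<Sum>k=1..3. (\<Prod>j\<in>{n..<n+k}. h j) * f (n + k)) + f n = 0"
proof -
  define PF where "PF m = Pp h m * f m" for m
  have "Pp h n * ((\<Sum>k=1..n. (\<Prod>j\<in>{n-k..<n}. 1 / h j) * f (n - k))
       + (\<Sum>k=1..3. (\<Prod>j\<in>{n..<n+k}. h j) * f (n + k)) + f n)
     = (\<Sum>k=1..n. PF (n - k)) + (\<Sum>k=1..3. PF (n + k)) + PF n"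
  proof -
    have e1: "Pp h n * (\<Sum>k=1..n. (\<Prod>j\<in>{n-k..<n}. 1 / h j) * f (n - k)) = (\<Sum>k=1..n. PF (n - k))"
      unfolding sum_distrib_left
      by (rule sum.cong[OF refl]) (simp add: PF_def Pp_down[OF nz] mult.assoc[symmetric])
    have e2: "Pp h n * (\<Sum>k=1..3. (\<Prod>j\<in>{n..<n+k}. h j) * f (n + k)) = (\<Sum>k=1..3. PF (n + k))"
      unfolding sum_distrib_left
      by (rule sum.cong[OF refl]) (simp add: PF_def Pp_up mult.assoc[symmetric])
    show ?thesis unfolding distrib_left e1 e2 by (simp add: PF_def)
  qed
  also have "(\<Sum>k=1..n. PF (n - k)) = (\<Sum>m<n. PF m)" by (rule reflect_sum)
  also have "(\<Sum>k=1..3. PF (n + k)) = PF (n+1) + PF (n+2) + PF (n+3)"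
    by (simp add: numeral_3_eq_3 atLeastAtMostSuc_conv add.commute add.left_commute)
  also have "(\<Sum>m<n. PF m) + (PF (n+1) + PF (n+2) + PF (n+3)) + PF n = (\<Sum>m<n+4. PF m)"
    by (simp add: numeral_eq_Suc add.commute add.left_commute)
  also have "\<dots> = (\<Sum>m<3. PF m)"
    by (rule sum.mono_neutral_right) (use M in \<open>auto simp: PF_def\<close>)
  also have "\<dots> = 0" using a by (simp add: PF_def)
  finally show ?thesis using Pp_nz[of h n, OF nz] by simp
qed

lemma decay:
  assumes nz: "\<And>j. h j \<noteq> 0" and M: "\<forall>m\<ge>3. f m = 0" and a: "(\<Sum>m<3. Pp h m * f m) = 0"
    and n: "n \<ge> 6"
  shows "cmod (of_nat n * (\<Sum>k=1..n. 1 / of_nat k * ((\<Prod>j\<in>{n-k..<n}. 1 / h j) * f (n - k))))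
     \<le> (2 * cmod (Pp h 1 * f 1) + 4 * cmod (Pp h 2 * f 2)) / (real n * cmod (Pp h n))"
proof -
  define PF where "PF m = Pp h m * f m" for m
  define X where "X = (\<Sum>k=1..n. 1 / of_nat k * ((\<Prod>j\<in>{n-k..<n}. 1 / h j) * f (n - k)))"
  define \<phi> where "\<phi> m = PF m / of_nat (n - m)" for m
  have Pn: "Pp h n \<noteq> 0" by (rule Pp_nz) (rule nz)
  have "Pp h n * X = (\<Sum>k=1..n. \<phi> (n - k))"
    unfolding X_def sum_distrib_left
  proof (rule sum.cong[OF refl])
    fix k assume k: "k \<in> {1..n}"
    have "Pp h n * (1 / of_nat k * ((\<Prod>j\<in>{n-k..<n}. 1 / h j) * f (n - k)))
        = 1 / of_nat k * ((Pp h n * (\<Prod>j\<in>{n-k..<n}. 1 / h j)) * f (n - k))" by (simp add: mult_ac)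
    also have "\<dots> = PF (n - k) / of_nat k" using k by (simp add: Pp_down[OF nz] PF_def)
    also have "\<dots> = \<phi> (n - k)" using k by (simp add: \<phi>_def)
    finally show "Pp h n * (1 / of_nat k * ((\<Prod>j\<in>{n-k..<n}. 1 / h j) * f (n - k))) = \<phi> (n - k)" .
  qed
  also have "\<dots> = (\<Sum>m<n. \<phi> m)" by (rule reflect_sum)
  also have "\<dots> = (\<Sum>m<3. \<phi> m)"
    by (rule sum.mono_neutral_right) (use M n in \<open>auto simp: \<phi>_def PF_def\<close>)
  also have "\<dots> = PF 0 / of_nat n + PF 1 / of_nat (n - 1) + PF 2 / of_nat (n - 2)"
    by (simp add: numeral_3_eq_3 \<phi>_def numeral_2_eq_2)
  finally have PX: "Pp h n * X = PF 0 / of_nat n + PF 1 / of_nat (n - 1) + PF 2 / of_nat (n - 2)" .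
  have a0: "PF 0 + PF 1 + PF 2 = 0" using a by (simp add: numeral_3_eq_3 numeral_2_eq_2 PF_def add.assoc)
  hence a3: "PF 0 = - PF 1 - PF 2" by (simp add: algebra_simps eq_neg_iff_add_eq_0)
  have n1: "(of_nat (n - 1) :: complex) = of_nat n - 1" and n2: "(of_nat (n - 2) :: complex) = of_nat n - 2"
    using n by (simp_all add: of_nat_diff)
  have nz1: "(of_nat n :: complex) - 1 \<noteq> 0" and nz2: "(of_nat n :: complex) - 2 \<noteq> 0"
    and nz0: "(of_nat n :: complex) \<noteq> 0"
  proof -
    have "(of_nat n :: complex) \<noteq> of_nat 1" "(of_nat n :: complex) \<noteq> of_nat 2" "(of_nat n :: complex) \<noteq> of_nat 0"
      using n by (simp_all only: of_nat_eq_iff)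
    thus "(of_nat n :: complex) - 1 \<noteq> 0" "(of_nat n :: complex) - 2 \<noteq> 0" "(of_nat n :: complex) \<noteq> 0" by simp_all
  qed
  have key: "of_nat n * (Pp h n * X) = PF 1 / of_nat (n - 1) + 2 * PF 2 / of_nat (n - 2)"
  proof -
    have s1: "of_nat n * (PF 0 / of_nat n) = PF 0" using nz0 by simp
    have s2: "of_nat n * (PF 1 / (of_nat n - 1)) = PF 1 + PF 1 / (of_nat n - 1)"
      using nz1 by (simp add: field_simps)
    have s3: "of_nat n * (PF 2 / (of_nat n - 2)) = PF 2 + 2 * PF 2 / (of_nat n - 2)"
      using nz2 by (simp add: field_simps)
    show ?thesis unfolding PX n1 n2 distrib_left s1 s2 s3 using a0
      by (simp add: algebra_simps)
  qed
  have "cmod (of_nat n * X) * cmod (Pp h n) = cmod (PF 1 / of_nat (n - 1) + 2 * PF 2 / of_nat (n - 2))"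
  proof -
    have "cmod (of_nat n * X) * cmod (Pp h n) = cmod (of_nat n * (Pp h n * X))"
      by (simp only: norm_mult mult_ac)
    thus ?thesis by (simp only: key)
  qed
  also have "\<dots> \<le> cmod (PF 1) / real (n - 1) + 2 * cmod (PF 2) / real (n - 2)"
    by (rule order_trans[OF norm_triangle_ineq]) (simp add: norm_divide norm_mult)
  also have "\<dots> \<le> cmod (PF 1) * (2 / real n) + 2 * cmod (PF 2) * (2 / real n)"
  proof (rule add_mono)
    have "1 / real (n - 1) \<le> 2 / real n" using n by (simp add: divide_simps of_nat_diff)
    thus "cmod (PF 1) / real (n - 1) \<le> cmod (PF 1) * (2 / real n)"
      using mult_left_mono[of "1 / real (n - 1)" "2 / real n" "cmod (PF 1)"] by simp
    have "1 / real (n - 2) \<le> 2 / real n" using n by (simp add: divide_simps of_nat_diff)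
    thus "2 * cmod (PF 2) / real (n - 2) \<le> 2 * cmod (PF 2) * (2 / real n)"
      using mult_left_mono[of "1 / real (n - 2)" "2 / real n" "2 * cmod (PF 2)"] by simp
  qed
  also have "\<dots> = (2 * cmod (PF 1) + 4 * cmod (PF 2)) / real n" by (simp add: add_divide_distrib)
  finally have le: "cmod (of_nat n * X) * cmod (Pp h n) \<le> (2 * cmod (PF 1) + 4 * cmod (PF 2)) / real n" .
  have p: "cmod (Pp h n) > 0" using Pn by simp
  have "cmod (of_nat n * X) \<le> (2 * cmod (PF 1) + 4 * cmod (PF 2)) / real n / cmod (Pp h n)"
    by (subst pos_le_divide_eq[OF p]) (rule le)
  thus ?thesis unfolding X_def PF_def by (simp only: divide_divide_eq_left)
qed


definition AA :: "(nat \<Rightarrow> complex) \<Rightarrow> seq \<Rightarrow> seq" where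
  "AA h f = (\<lambda>n. \<Sum>k=1..3. 1 / of_nat k * ((\<Prod>j\<in>{n..<n+k}. h j) * f (n + k)))"
definition BB :: "(nat \<Rightarrow> complex) \<Rightarrow> seq \<Rightarrow> seq" where
  "BB h f = (\<lambda>n. \<Sum>k=1..n. 1 / of_nat k * ((\<Prod>j\<in>{n-k..<n}. 1 / h j) * f (n - k)))"

lemma LimX1_AA: assumes "\<forall>m\<ge>3. f m = 0" shows "LimX (X1 h) f = AA h f"
  using fin_log_X1[OF assms, of h] by (simp add: AA_def Cop_pow)

lemma Bop_sum: "(\<lambda>n. \<Sum>k=1..n. 1 / of_nat k * (Bop (\<lambda>n. 1 / h n) ^^ k) f n) = BB h f"
proof
  fix n show "(\<Sum>k=1..n. 1 / of_nat k * (Bop (\<lambda>n. 1 / h n) ^^ k) f n) = BB h f n"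
    unfolding BB_def by (rule sum.cong[OF refl]) (simp add: Bop_pow)
qed

lemma cA: "of_nat n * AA h f n - AA h (\<lambda>n. of_nat n * f n) n
   = - (\<Sum>k=1..3. (\<Prod>j\<in>{n..<n+k}. h j) * f (n + k))"
proof -
  have "of_nat n * AA h f n - AA h (\<lambda>n. of_nat n * f n) n
      = (\<Sum>k=1..3. of_nat n * (1 / of_nat k * ((\<Prod>j\<in>{n..<n+k}. h j) * f (n + k)))
                 - 1 / of_nat k * ((\<Prod>j\<in>{n..<n+k}. h j) * (of_nat (n + k) * f (n + k))))"
    unfolding AA_def sum_distrib_left sum_subtractf by simp
  also have "\<dots> = (\<Sum>k=1..3. - ((\<Prod>j\<in>{n..<n+k}. h j) * f (n + k)))"
  proof (rule sum.cong[OF refl])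
    fix k :: nat assume k: "k \<in> {1..3}"
    hence kz: "(of_nat k :: complex) \<noteq> 0" by simp
    show "of_nat n * (1 / of_nat k * ((\<Prod>j\<in>{n..<n+k}. h j) * f (n + k)))
                 - 1 / of_nat k * ((\<Prod>j\<in>{n..<n+k}. h j) * (of_nat (n + k) * f (n + k)))
          = - ((\<Prod>j\<in>{n..<n+k}. h j) * f (n + k))"
      using kz by (simp add: field_simps)
  qed
  also have "\<dots> = - (\<Sum>k=1..3. (\<Prod>j\<in>{n..<n+k}. h j) * f (n + k))" by (simp add: sum_negf)
  finally show ?thesis .
qed

lemma cB: "of_nat n * BB h f n - BB h (\<lambda>n. of_nat n * f n) n
   = (\<Sum>k=1..n. (\<Prod>j\<in>{n-k..<n}. 1 / h j) * f (n - k))"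
proof -
  have "of_nat n * BB h f n - BB h (\<lambda>n. of_nat n * f n) n
      = (\<Sum>k=1..n. of_nat n * (1 / of_nat k * ((\<Prod>j\<in>{n-k..<n}. 1 / h j) * f (n - k)))
                 - 1 / of_nat k * ((\<Prod>j\<in>{n-k..<n}. 1 / h j) * (of_nat (n - k) * f (n - k))))"
    unfolding BB_def sum_distrib_left sum_subtractf by simp
  also have "\<dots> = (\<Sum>k=1..n. (\<Prod>j\<in>{n-k..<n}. 1 / h j) * f (n - k))"
  proof (rule sum.cong[OF refl])
    fix k :: nat assume k: "k \<in> {1..n}"
    hence kz: "(of_nat k :: complex) \<noteq> 0" and kn: "(of_nat (n - k) :: complex) = of_nat n - of_nat k"
      by (simp_all add: of_nat_diff)
    show "of_nat n * (1 / of_nat k * ((\<Prod>j\<in>{n-k..<n}. 1 / h j) * f (n - k)))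
                 - 1 / of_nat k * ((\<Prod>j\<in>{n-k..<n}. 1 / h j) * (of_nat (n - k) * f (n - k)))
          = (\<Prod>j\<in>{n-k..<n}. 1 / h j) * f (n - k)"
      unfolding kn using kz by (simp add: field_simps)
  qed
  finally show ?thesis .
qed

lemma AA_zero: assumes "\<forall>m\<ge>3. f m = 0" "n \<ge> 3" shows "AA h f n = 0"
  unfolding AA_def using assms by (intro sum.neutral) auto

context hyp
begin

lemma nz': "g' j \<noteq> 0" by (simp add: g'_def nz)

lemma forms: assumes M: "\<forall>m\<ge>3. f m = 0"
  shows "LimX (X1 g) f = AA g f" "LimX (X1 g') f = AA g' f"
    "LimX (X2 g) f = BB g f" "LimX (X2 g') f = BB g' f"
proof -
  show "LimX (X1 g) f = AA g f" "LimX (X1 g') f = AA g' f" by (rule LimX1_AA[OF M])+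
  show "LimX (X2 g) f = BB g f" using fin_X2g[OF M] Bop_sum by simp
  have "LimX (X2 g') f = (\<lambda>n. \<Sum>k=1..n. 1 / of_nat k * (Bop (\<lambda>n. 1 / g' n) ^^ k) f n)"
    using fin_X2g'[OF M] by (simp add: w1)
  thus "LimX (X2 g') f = BB g' f" using Bop_sum by simp
qed

lemma appT': "app (Top g) f = (\<lambda>n. \<i> / 2 * (LimX (X2 g) f n - LimX (X1 g) f n
     + LimX (X2 g') f n - LimX (X1 g') f n))"
  by (simp add: app_T g'_def)

lemma Tform: assumes M: "\<forall>m\<ge>3. f m = 0"
  shows "app (Top g) f = (\<lambda>n. \<i> / 2 * (BB g f n - AA g f n + BB g' f n - AA g' f n))"
  unfolding appT' forms[OF M] ..

lemma Qlo: assumes n: "n \<ge> n0 + 2" shows "Qg g n \<ge> c1 / real n powr d1"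
proof -
  have "n - 1 > n0" using n by (simp; arith)
  hence "c1 * real (n - 1) powr (- d1) \<le> Qg g n"
    using lo n by (auto simp: Qg_atMost)
  moreover have "real (n - 1) powr d1 \<le> real n powr d1" by (rule powr_mono2) (use d1 in auto)
  moreover have "real (n - 1) > 0" using n by simp
  ultimately have a: "c1 / real (n - 1) powr d1 \<le> Qg g n"
    and b: "real (n - 1) powr d1 \<le> real n powr d1" and p: "0 < real (n - 1) powr d1"
    by (simp_all add: powr_minus divide_inverse)
  have "c1 / real n powr d1 \<le> c1 / real (n - 1) powr d1"
    by (rule divide_left_mono[OF b]) (use c1 p in auto)
  thus ?thesis using a by linarith
qed

lemma Qhi: assumes n: "n \<ge> n0 + 2" shows "Qg g n \<le> c2 * real n powr d2"
proof -
  have "n - 1 > n0" using n by (simp; arith)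
  hence "Qg g n \<le> c2 * real (n - 1) powr d2"
    using hi n by (auto simp: Qg_atMost)
  moreover have "real (n - 1) powr d2 \<le> real n powr d2" by (rule powr_mono2) (use d2 in auto)
  moreover have "c2 * real (n - 1) powr d2 \<le> c2 * real n powr d2"
    using calculation(2) c2 by (intro mult_left_mono) auto
  ultimately show ?thesis by linarith
qed

lemma Pp_g_norm: "cmod (Pp g n) = Qg g n"
  by (simp add: Pp_def Qg_def prod_norm)
lemma Pp_g'_norm: "cmod (Pp g' n) = 1 / Qg g n"
  by (simp add: Pp_def Qg_def prod_norm[symmetric] g'_def norm_divide prod_dividef)

end


lemma powr_div_n: "n > 0 \<Longrightarrow> real n powr e / real n = real n powr (e - 1)"
  by (simp add: powr_diff)

lemma summable_powr_sq: "d < 1/2 \<Longrightarrow> summable (\<lambda>n. (C * real n powr (d - 1))^2)"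
proof -
  assume d: "d < 1/2"
  have "summable (\<lambda>n. real n powr (2 * (d - 1)))" using d by (subst summable_real_powr_iff) simp
  hence "summable (\<lambda>n. C^2 * real n powr (2 * (d - 1)))" by (rule summable_mult)
  thus ?thesis by (simp add: power_mult_distrib powr_sq)
qed

context hyp
begin

definition Vset :: "seq set" where
  "Vset = {f. (\<forall>m\<ge>3. f m = 0) \<and> (\<Sum>m<3. Pp g m * f m) = 0 \<and> (\<Sum>m<3. Pp g' m * f m) = 0}"

lemma decay_g: assumes f: "f \<in> Vset" and n: "n \<ge> max 6 (n0 + 2)"
  shows "cmod (of_nat n * BB g f n) \<le> (2 * cmod (Pp g 1 * f 1) + 4 * cmod (Pp g 2 * f 2)) / c1
     * real n powr (max d1 d2 - 1)"
proof -
  define K where "K = 2 * cmod (Pp g 1 * f 1) + 4 * cmod (Pp g 2 * f 2)"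
  have K0: "K \<ge> 0" by (simp add: K_def)
  have M: "\<forall>m\<ge>3. f m = 0" and a: "(\<Sum>m<3. Pp g m * f m) = 0" using f by (auto simp: Vset_def)
  have np: "n > 0" using n by simp
  have "cmod (of_nat n * BB g f n) \<le> K / (real n * cmod (Pp g n))"
    unfolding BB_def K_def by (rule decay[OF nz M a]) (use n in simp)
  also have "\<dots> = K / (real n * Qg g n)" by (simp add: Pp_g_norm)
  also have "\<dots> \<le> K / (real n * (c1 / real n powr d1))"
  proof (rule divide_left_mono[OF _ K0])
    show "real n * (c1 / real n powr d1) \<le> real n * Qg g n"
      using Qlo[of n] n by (intro mult_left_mono) auto
    show "0 < real n * Qg g n * (real n * (c1 / real n powr d1))"
      using np c1 Qp[of n] by simp
  qed
  also have "\<dots> = K / c1 * (real n powr d1 / real n)" using np c1 by (simp add: field_simps)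
  also have "\<dots> = K / c1 * real n powr (d1 - 1)" using np by (simp add: powr_div_n)
  also have "\<dots> \<le> K / c1 * real n powr (max d1 d2 - 1)"
    by (rule mult_left_mono, rule powr_mono) (use np c1 K0 in auto)
  finally show ?thesis unfolding K_def .
qed

lemma decay_g': assumes f: "f \<in> Vset" and n: "n \<ge> max 6 (n0 + 2)"
  shows "cmod (of_nat n * BB g' f n) \<le> (2 * cmod (Pp g' 1 * f 1) + 4 * cmod (Pp g' 2 * f 2)) * c2
     * real n powr (max d1 d2 - 1)"
proof -
  define K where "K = 2 * cmod (Pp g' 1 * f 1) + 4 * cmod (Pp g' 2 * f 2)"
  have K0: "K \<ge> 0" by (simp add: K_def)
  have M: "\<forall>m\<ge>3. f m = 0" and a: "(\<Sum>m<3. Pp g' m * f m) = 0" using f by (auto simp: Vset_def)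
  have np: "n > 0" using n by simp
  have "cmod (of_nat n * BB g' f n) \<le> K / (real n * cmod (Pp g' n))"
    unfolding BB_def K_def by (rule decay[OF nz' M a]) (use n in simp)
  also have "\<dots> = K * Qg g n / real n" using Qp[of n] by (simp add: Pp_g'_norm)
  also have "\<dots> \<le> K * (c2 * real n powr d2) / real n"
    using Qhi[of n] n K0 np by (intro divide_right_mono mult_left_mono) auto
  also have "\<dots> = K * c2 * (real n powr d2 / real n)" by simp
  also have "\<dots> = K * c2 * real n powr (d2 - 1)" using np by (simp add: powr_div_n)
  also have "\<dots> \<le> K * c2 * real n powr (max d1 d2 - 1)"
    by (rule mult_left_mono, rule powr_mono) (use np c2 K0 in auto)
  finally show ?thesis unfolding K_def .
qed

lemma NT_l2: assumes f: "f \<in> Vset" shows "(\<lambda>n. of_nat n * app (Top g) f n) \<in> l2"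
proof -
  have M: "\<forall>m\<ge>3. f m = 0" using f by (auto simp: Vset_def)
  define A where "A = (2 * cmod (Pp g 1 * f 1) + 4 * cmod (Pp g 2 * f 2)) / c1"
  define B where "B = (2 * cmod (Pp g' 1 * f 1) + 4 * cmod (Pp g' 2 * f 2)) * c2"
  define d where "d = max d1 d2"
  have dd: "d < 1/2" using d1 d2 by (simp add: d_def)
  show ?thesis
  proof (rule l2_eventually[OF _ summable_powr_sq[OF dd, of "A + B"]])
    show "\<forall>\<^sub>F n in sequentially. cmod (of_nat n * app (Top g) f n) \<le> (A + B) * real n powr (d - 1)"
    proof (rule eventually_mono[OF eventually_ge_at_top[of "max 6 (n0 + 2)"]])
      fix n assume n: "max 6 (n0 + 2) \<le> n"
      have "app (Top g) f n = \<i> / 2 * (BB g f n + BB g' f n)"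
        using AA_zero[OF M, of n] n by (simp add: Tform[OF M])
      hence "of_nat n * app (Top g) f n = \<i> / 2 * (of_nat n * BB g f n + of_nat n * BB g' f n)"
        by (simp add: algebra_simps)
      hence "cmod (of_nat n * app (Top g) f n) = cmod (\<i> / 2 * (of_nat n * BB g f n + of_nat n * BB g' f n))"
        by (rule arg_cong)
      also have "\<dots> = cmod (of_nat n * BB g f n + of_nat n * BB g' f n) / 2"
        by (simp add: norm_mult norm_divide)
      also have "\<dots> \<le> (cmod (of_nat n * BB g f n) + cmod (of_nat n * BB g' f n)) / 2"
        by (intro divide_right_mono norm_triangle_ineq) simp
      also have "\<dots> \<le> (A * real n powr (d - 1) + B * real n powr (d - 1)) / 2"
        using decay_g[OF f n] decay_g'[OF f n] unfolding A_def B_def d_def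
        by (intro divide_right_mono add_mono) auto
      also have "\<dots> \<le> (A + B) * real n powr (d - 1)"
      proof -
        have "0 \<le> A" "0 \<le> B" using c1 c2 by (simp_all add: A_def B_def)
        hence "0 \<le> (A + B) * real n powr (d - 1)" by simp
        thus ?thesis by (simp add: algebra_simps)
      qed
      finally show "cmod (of_nat n * app (Top g) f n) \<le> (A + B) * real n powr (d - 1)" .
    qed
  qed
qed

end


lemma dom_comp: "dom (op_comp A B) = {f \<in> dom B. app B f \<in> dom A}"
  by (simp add: op_comp_def dom_def)
lemma app_comp: "app (op_comp A B) f = app A (app B f)"
  by (simp add: op_comp_def app_def)

context hyp
begin

lemma Vset_fin: "f \<in> Vset \<Longrightarrow> \<forall>m\<ge>3. f m = 0" by (simp add: Vset_def)

lemma comm: assumes f: "f \<in> Vset"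
  shows "of_nat n * app (Top g) f n - app (Top g) (\<lambda>n. of_nat n * f n) n = - \<i> * f n"
proof -
  have M: "\<forall>m\<ge>3. f m = 0" and a1: "(\<Sum>m<3. Pp g m * f m) = 0" and a2: "(\<Sum>m<3. Pp g' m * f m) = 0"
    using f by (auto simp: Vset_def)
  define Nf where "Nf = (\<lambda>n. of_nat n * f n :: complex)"
  have MN: "\<forall>m\<ge>3. Nf m = 0" using M by (simp add: Nf_def)
  have "of_nat n * app (Top g) f n - app (Top g) Nf n
     = \<i> / 2 * ((of_nat n * BB g f n - BB g Nf n) - (of_nat n * AA g f n - AA g Nf n)
          + (of_nat n * BB g' f n - BB g' Nf n) - (of_nat n * AA g' f n - AA g' Nf n))"
    unfolding Tform[OF M] Tform[OF MN] by (simp add: algebra_simps)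
  also have "\<dots> = \<i> / 2 * (
        ((\<Sum>k=1..n. (\<Prod>j\<in>{n-k..<n}. 1 / g j) * f (n - k)) + (\<Sum>k=1..3. (\<Prod>j\<in>{n..<n+k}. g j) * f (n + k)))
      + ((\<Sum>k=1..n. (\<Prod>j\<in>{n-k..<n}. 1 / g' j) * f (n - k)) + (\<Sum>k=1..3. (\<Prod>j\<in>{n..<n+k}. g' j) * f (n + k))))"
    unfolding Nf_def cA cB by (simp add: algebra_simps)
  also have "\<dots> = \<i> / 2 * ((- f n) + (- f n))"
    by (simp only: pair_identity[OF nz M a1, of n, folded eq_neg_iff_add_eq_0]
         pair_identity[OF nz' M a2, of n, folded eq_neg_iff_add_eq_0])
  also have "\<dots> = - \<i> * f n" by simp
  finally show ?thesis unfolding Nf_def .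
qed

lemma Vset_sub: "linear_subspace Vset"
  unfolding linear_subspace_def Vset_def
  by (auto simp: sum.distrib distrib_left sum_distrib_left[symmetric] mult.left_commute)

lemma Vset_nonzero: "Vset \<noteq> {\<lambda>n. 0}"
proof -
  define a where "a = Pp g 1" define b where "b = Pp g 2"
  define a' where "a' = Pp g' 1" define b' where "b' = Pp g' 2"
  have s: "(\<Sum>m<3. Pp h m * f m) = f 0 + Pp h 1 * f 1 + Pp h 2 * f 2" for h f
    by (simp add: numeral_3_eq_3 numeral_2_eq_2 Pp_def)
  obtain v where v: "v \<in> Vset" "v 1 \<noteq> 0 \<or> v 2 \<noteq> 0"
  proof (cases "a = a' \<and> b = b'")
    case True
    define v where "v = (\<lambda>n::nat. if n = 0 then a else if n = 1 then -1 else (0::complex))"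
    have "v \<in> Vset" unfolding Vset_def using True
      by (simp add: s v_def a_def b_def a'_def b'_def)
    moreover have "v 1 \<noteq> 0" by (simp add: v_def)
    ultimately show ?thesis using that by blast
  next
    case False
    define v where "v = (\<lambda>n::nat. if n = 0 then a * b' - b * a' else if n = 1 then b - b'
                             else if n = 2 then a' - a else (0::complex))"
    have "v \<in> Vset" unfolding Vset_def
      by (simp add: s v_def a_def b_def a'_def b'_def algebra_simps)
    moreover have "v 1 \<noteq> 0 \<or> v 2 \<noteq> 0" using False by (auto simp: v_def)
    ultimately show ?thesis using that by blast
  qed
  thus ?thesis by (metis singletonD)
qed

lemma time_op: "time_operator (Top g) num_op"
proof -
  have sym: "symmetric_op (Top g)" by (rule T_symmetric[OF nz])
  have dn: "\<And>f. f \<in> dom num_op \<longleftrightarrow> f \<in> l2 \<and> (\<lambda>n. of_nat n * f n) \<in> l2"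
    by (simp add: num_op_def mult_op_def dom_def)
  have an: "\<And>f. app num_op f = (\<lambda>n. of_nat n * f n)"
    by (simp add: num_op_def mult_op_def app_def)
  have finV: "fin f" if "f \<in> Vset" for f using Vset_fin[OF that] by (auto simp: fin_def)
  have finN: "fin (\<lambda>n. of_nat n * f n)" if "f \<in> Vset" for f
    using Vset_fin[OF that] unfolding fin_def by (rule_tac x=3 in exI) simp
  have sub: "Vset \<subseteq> dom (op_comp num_op (Top g)) \<inter> dom (op_comp (Top g) num_op)"
  proof
    fix f assume f: "f \<in> Vset"
    have fd: "f \<in> dom (Top g)" by (rule fin_domT[OF finV[OF f]])
    have Tl: "app (Top g) f \<in> l2" using sym fd by (simp add: symmetric_op_def)
    have "f \<in> dom (op_comp num_op (Top g))"
      using fd Tl NT_l2[OF f] by (simp add: dom_comp dn)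
    moreover have "f \<in> dom (op_comp (Top g) num_op)"
      using fin_l2[OF finV[OF f]] fin_l2[OF finN[OF f]] fin_domT[OF finN[OF f]]
      by (simp add: dom_comp dn an)
    ultimately show "f \<in> dom (op_comp num_op (Top g)) \<inter> dom (op_comp (Top g) num_op)" by simp
  qed
  have cm: "\<forall>f\<in>Vset. \<forall>n. app (op_comp num_op (Top g)) f n - app (op_comp (Top g) num_op) f n = - \<i> * f n"
    using comm by (simp add: app_comp an)
  show ?thesis unfolding time_operator_def
    using sym dense Vset_sub Vset_nonzero sub cm by blast
qed

end

theorem mainTheorem13:
  fixes g :: "nat \<Rightarrow> complex"
  assumes nz: "\<And>k. g k \<noteq> 0"
    and bnd: "\<exists>n0::nat. \<exists>c1 c2 d1 d2 :: real. c1 > 0 \<and> c2 > 0 \<and>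
               0 < d1 \<and> d1 < 1/2 \<and> 0 < d2 \<and> d2 < 1/2 \<and>
               (\<forall>n>n0. c1 * real n powr (- d1) \<le> (\<Prod>k\<le>n. cmod (g k)) \<and>
                        (\<Prod>k\<le>n. cmod (g k)) \<le> c2 * real n powr d2)"
  shows "time_operator
           (op_scale (1/2) (op_add (L_op g) (L_op (\<lambda>n. 1 / cnj (g n))))) num_op"
proof -
  obtain n0 c1 c2 d1 d2 where h: "c1 > 0" "c2 > 0" "0 < d1" "d1 < 1/2" "0 < d2" "d2 < 1/2"
    "\<forall>n>n0. c1 * real n powr (- d1) \<le> (\<Prod>k\<le>n. cmod (g k)) \<and>
                        (\<Prod>k\<le>n. cmod (g k)) \<le> c2 * real n powr d2"
    using bnd by blast
  interpret hyp g n0 c1 c2 d1 d2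
    by (unfold_locales) (use nz h in auto)
  show ?thesis using time_op by (simp add: Top_def)
qed


end
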